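(* Let $B$ satisfy the standing assumptions below. Let $\xi_0,\xi_0^n\in\mathcal{M}$, $n\in\mathbb{N}$, with $\lim_{n\to\infty}\|\xi_0^n-\xi_0\|=0$, and let $[0,T]$ be a common time interval of existence and uniqueness for the flow equation $\xi_t=\varphi^{t,B(\xi)}_\sharp\xi_0$ with initial conditions $\xi_0$ and $\xi_0^n$; denote by $\xi,\xi^n\in C([0,T];\mathcal{M})$ the corresponding solutions. Then $\xi^n\to\xi$ in $C([0,T];\mathcal{M}_w)$; more precisely there exists a constant $C>0$, depending on the $\|\cdot\|$-norms of $\xi_0,\xi_0^n$ and on $T$, such that $$\sup_{t\in[0,T]}\|\xi_t^n-\xi_t\|\le C\|\xi_0^n-\xi_0\|.$$
   Context: $\mathcal{M}$ is the dual of $C_b(\mathbb{R}^d;\mathbb{R}^d)$ (bounded continuous vector fields, sup norm $\|\cdot\|_\infty$). Weak norm: $\|\xi\|=\sup\{\xi(\theta):\|\theta\|_\infty+\mathrm{Lip}(\theta)\le1\}$; $\mathcal{M}_w$ is $\mathcal{M}$ with metric $d(\xi,\xi')=\|\xi-\xi'\|$. Standing assumptions: $B:\mathcal{M}_w\to C_b^2(\mathbb{R}^d,\mathbb{R}^d)$ is continuous and there is $C_B>0$ with, for all $\xi,\xi'$: $\|B(\xi)\|_{C_b^2}\le C_B(\|\xi\|+1)$, $\|B(\xi)-B(\xi')\|_\infty\le C_B\|\xi-\xi'\|$, $\|DB(\xi)-DB(\xi')\|_\infty\le C_B\|\xi-\xi'\|$ ($D$ the spatial derivative). $\varphi^{t,B(\xi)}$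 is the flow of $\frac{dx_t}{dt}=B(\xi_t)(x_t)$ with $\varphi^{0,B(\xi)}=\mathrm{id}$. Push-forward: $(\varphi_\sharp\theta)(x)=D\varphi(x)^T\theta(\varphi(x))$ and $(\varphi_\sharp\xi)(\theta)=\xi(\varphi_\sharp\theta)$. *)

theory Defs
  imports "HOL-Analysis.Analysis"
begin

text \<open>Bounded continuous vector fields on R^d: the type of bounded continuous functions with the
sup norm.  The space M is its (continuous) dual.\<close>

type_synonym 'd R = "real^'d"
type_synonym 'd field = "'d R \<Rightarrow>\<^sub>C 'd R"
type_synonym 'd meas = "'d field \<Rightarrow>\<^sub>L real"

definition lip :: "'d::finite field \<Rightarrow> real" where
  "lip \<theta> = Inf {L. L-lipschitz_on UNIV (apply_bcontfun \<theta>)}"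

definition wnorm :: "'d::finite meas \<Rightarrow> real" where
  "wnorm \<xi> = (SUP \<theta>\<in>{\<theta>. (\<exists>L. L-lipschitz_on UNIV (apply_bcontfun \<theta>)) \<and> norm \<theta> + lip \<theta> \<le> 1}.
                 blinfun_apply \<xi> \<theta>)"

definition Dsp :: "('d::finite R \<Rightarrow> 'd R) \<Rightarrow> 'd R \<Rightarrow> ('d R \<Rightarrow>\<^sub>L 'd R)" where
  "Dsp f x = Blinfun (frechet_derivative f (at x))"

definition D2sp :: "('d::finite R \<Rightarrow> 'd R) \<Rightarrow> 'd R \<Rightarrow> ('d R \<Rightarrow>\<^sub>L ('d R \<Rightarrow>\<^sub>L 'd R))" where
  "D2sp f x = Blinfun (frechet_derivative (Dsp f) (at x))"

definition Cb2 :: "('d::finite R \<Rightarrow> 'd R) \<Rightarrow> bool" where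
  "Cb2 f \<longleftrightarrow> (\<forall>x. f differentiable at x) \<and> (\<forall>x. Dsp f differentiable at x)
      \<and> continuous_on UNIV (D2sp f)
      \<and> bounded (range f) \<and> bounded (range (Dsp f)) \<and> bounded (range (D2sp f))"

definition cb2norm :: "('d::finite R \<Rightarrow> 'd R) \<Rightarrow> real" where
  "cb2norm f = (SUP x. norm (f x)) + (SUP x. norm (Dsp f x)) + (SUP x. norm (D2sp f x))"

definition supnorm :: "('d::finite R \<Rightarrow> 'd R) \<Rightarrow> real" where
  "supnorm f = (SUP x. norm (f x))"

definition standing_assms :: "('d::finite meas \<Rightarrow> ('d R \<Rightarrow> 'd R)) \<Rightarrow> real \<Rightarrow> bool" where
  "standing_assms B CB \<longleftrightarrow> CB > 0
     \<and> (\<forall>\<xi>. Cb2 (B \<xi>))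
     \<and> (\<forall>\<xi>. \<forall>\<epsilon>>0. \<exists>\<delta>>0. \<forall>\<xi>'. wnorm (\<xi>' - \<xi>) < \<delta> \<longrightarrow>
            cb2norm (\<lambda>x. B \<xi>' x - B \<xi> x) < \<epsilon>)
     \<and> (\<forall>\<xi>. cb2norm (B \<xi>) \<le> CB * (wnorm \<xi> + 1))
     \<and> (\<forall>\<xi> \<xi>'. supnorm (\<lambda>x. B \<xi> x - B \<xi>' x) \<le> CB * wnorm (\<xi> - \<xi>'))
     \<and> (\<forall>\<xi> \<xi>'. (SUP x. norm (Dsp (B \<xi>) x - Dsp (B \<xi>') x)) \<le> CB * wnorm (\<xi> - \<xi>'))"

definition is_flow :: "('d::finite meas \<Rightarrow> ('d R \<Rightarrow> 'd R)) \<Rightarrow> real \<Rightarrow> (real \<Rightarrow> 'd meas)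
     \<Rightarrow> (real \<Rightarrow> 'd R \<Rightarrow> 'd R) \<Rightarrow> bool" where
  "is_flow B T \<xi> \<phi> \<longleftrightarrow> (\<forall>x. \<phi> 0 x = x) \<and>
     (\<forall>x. \<forall>t\<in>{0..T}. ((\<lambda>s. \<phi> s x) has_vector_derivative B (\<xi> t) (\<phi> t x)) (at t within {0..T}))"

definition pf_field :: "('d R \<Rightarrow> 'd R) \<Rightarrow> 'd::finite field \<Rightarrow> 'd R \<Rightarrow> 'd R" where
  "pf_field \<phi> \<theta> x = transpose (matrix (frechet_derivative \<phi> (at x))) *v apply_bcontfun \<theta> (\<phi> x)"

definition pf_meas :: "('d R \<Rightarrow> 'd R) \<Rightarrow> 'd::finite meas \<Rightarrow> 'd meas" where
  "pf_meas \<phi> \<xi> = Blinfun (\<lambda>\<theta>. blinfun_apply \<xi> (Bcontfun (pf_field \<phi> \<theta>)))"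

definition wcont_on :: "real \<Rightarrow> (real \<Rightarrow> 'd::finite meas) \<Rightarrow> bool" where
  "wcont_on T \<xi> \<longleftrightarrow> (\<forall>t\<in>{0..T}. \<forall>\<epsilon>>0. \<exists>\<delta>>0. \<forall>s\<in>{0..T}. \<bar>s - t\<bar> < \<delta> \<longrightarrow> wnorm (\<xi> s - \<xi> t) < \<epsilon>)"

definition is_solution :: "('d::finite meas \<Rightarrow> ('d R \<Rightarrow> 'd R)) \<Rightarrow> real \<Rightarrow> 'd meas
     \<Rightarrow> (real \<Rightarrow> 'd meas) \<Rightarrow> bool" where
  "is_solution B T \<xi>0 \<xi> \<longleftrightarrow> wcont_on T \<xi> \<and> \<xi> 0 = \<xi>0 \<and>
     (\<exists>\<phi>. is_flow B T \<xi> \<phi> \<and> (\<forall>t\<in>{0..T}. \<xi> t = pf_meas (\<phi> t) \<xi>0))"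

definition unique_solution :: "('d::finite meas \<Rightarrow> ('d R \<Rightarrow> 'd R)) \<Rightarrow> real \<Rightarrow> 'd meas
     \<Rightarrow> (real \<Rightarrow> 'd meas) \<Rightarrow> bool" where
  "unique_solution B T \<xi>0 \<xi> \<longleftrightarrow> is_solution B T \<xi>0 \<xi> \<and>
     (\<forall>\<eta>. is_solution B T \<xi>0 \<eta> \<longrightarrow> (\<forall>t\<in>{0..T}. \<eta> t = \<xi> t))"

end

theory Submission
  imports Defs
begin

lemma lip_facts:
  assumes "L-lipschitz_on UNIV (apply_bcontfun \<theta>)"
  shows "0 \<le> lip \<theta>" "lip \<theta> \<le> L" "(lip \<theta>)-lipschitz_on UNIV (apply_bcontfun \<theta>)"
proof -
  let ?S = "{L. L-lipschitz_on UNIV (apply_bcontfun \<theta>)}"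
  have ne: "?S \<noteq> {}" using assms by auto
  have bb: "bdd_below ?S" by (rule bdd_belowI[of _ 0]) (auto dest: lipschitz_on_nonneg)
  show g0: "0 \<le> lip \<theta>" unfolding lip_def by (rule cInf_greatest[OF ne]) (auto dest: lipschitz_on_nonneg)
  show "lip \<theta> \<le> L" unfolding lip_def by (rule cInf_lower[OF _ bb]) (use assms in auto)
  show "(lip \<theta>)-lipschitz_on UNIV (apply_bcontfun \<theta>)"
  proof (rule lipschitz_onI[OF _ g0])
    fix x y :: "'a R"
    show "dist (\<theta> x) (\<theta> y) \<le> lip \<theta> * dist x y"
    proof (cases "x = y")
      case False
      then have dp: "dist x y > 0" by simp
      have "dist (\<theta> x) (\<theta> y) / dist x y \<le> lip \<theta>"
        unfolding lip_def
      proof (rule cInf_greatest[OF ne])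
        fix L' assume "L' \<in> ?S"
        then have "dist (\<theta> x) (\<theta> y) \<le> L' * dist x y" by (auto dest: lipschitz_onD)
        then show "dist (\<theta> x) (\<theta> y) / dist x y \<le> L'" using dp by (simp add: divide_le_eq)
      qed
      then show ?thesis using dp by (simp add: divide_le_eq mult.commute)
    qed simp
  qed
qed

definition BLset :: "'d::finite field set" where
  "BLset = {\<theta>. (\<exists>L. L-lipschitz_on UNIV (apply_bcontfun \<theta>)) \<and> norm \<theta> + lip \<theta> \<le> 1}"

lemma wnorm_alt: "wnorm \<xi> = (SUP \<theta>\<in>BLset. blinfun_apply \<xi> \<theta>)"
  unfolding wnorm_def BLset_def ..

lemma zero_BLset: "(0::'d::finite field) \<in> BLset"
proof -
  have "0-lipschitz_on UNIV (apply_bcontfun (0::'d::finite field))"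
    by (auto intro: lipschitz_onI)
  then show ?thesis unfolding BLset_def using lip_facts(2)[of 0 "0::'d field"] lip_facts(1)[of 0 "0::'d field"]
    by auto
qed

lemma BLset_bdd: "bdd_above ((\<lambda>\<theta>. blinfun_apply (\<xi>::'d::finite meas) \<theta>) ` BLset)"
proof (rule bdd_aboveI2)
  fix \<theta> :: "'d::finite field" assume "\<theta> \<in> BLset"
  then obtain L where L: "L-lipschitz_on UNIV (apply_bcontfun \<theta>)" and n: "norm \<theta> + lip \<theta> \<le> 1"
    unfolding BLset_def by auto
  have "norm \<theta> \<le> 1" using n lip_facts(1)[OF L] by linarith
  have "blinfun_apply \<xi> \<theta> \<le> norm (blinfun_apply \<xi> \<theta>)" by simp
  also have "\<dots> \<le> norm \<xi> * norm \<theta>" by (rule norm_blinfun)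
  also have "\<dots> \<le> norm \<xi>" using \<open>norm \<theta> \<le> 1\<close> by (simp add: mult_left_le)
  finally show "blinfun_apply \<xi> \<theta> \<le> norm \<xi>" .
qed

lemma wnorm_nonneg: "0 \<le> wnorm \<xi>"
proof -
  have "blinfun_apply \<xi> 0 \<le> wnorm \<xi>" unfolding wnorm_alt
    by (rule cSUP_upper[OF zero_BLset BLset_bdd])
  then show ?thesis by simp
qed

lemma lipschitz_scale:
  assumes "L-lipschitz_on UNIV (apply_bcontfun \<theta>)" "c \<ge> 0"
  shows "(c*L)-lipschitz_on UNIV (apply_bcontfun (c *\<^sub>R \<theta>))"
proof (rule lipschitz_onI)
  fix x y
  have "dist (c *\<^sub>R \<theta> x) (c *\<^sub>R \<theta> y) = c * dist (\<theta> x) (\<theta> y)"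
    using assms(2) by (simp add: dist_norm flip: scaleR_diff_right)
  also have "\<dots> \<le> c * (L * dist x y)" using assms by (auto intro!: mult_left_mono dest: lipschitz_onD)
  finally show "dist (apply_bcontfun (c *\<^sub>R \<theta>) x) (apply_bcontfun (c *\<^sub>R \<theta>) y) \<le> c * L * dist x y" by simp
  show "0 \<le> c * L" using assms(2) lipschitz_on_nonneg[OF assms(1)] by simp
qed

lemma wnorm_ge:
  fixes \<theta> :: "'d::finite field"
  assumes L: "L-lipschitz_on UNIV (apply_bcontfun \<theta>)" and N: "norm \<theta> \<le> N"
  shows "blinfun_apply \<xi> \<theta> \<le> wnorm \<xi> * (N + L)"
proof -
  have L0: "L \<ge> 0" using L lipschitz_on_nonneg by auto
  show ?thesis
  proof (cases "N + L = 0")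
    case True
    then have "norm \<theta> \<le> 0" using N L0 norm_ge_zero[of \<theta>] by linarith
    then have "\<theta> = 0" by simp
    then show ?thesis using True by simp
  next
    case False
    define c where "c = N + L"
    have cp: "c > 0" using False N L0 norm_ge_zero[of \<theta>] unfolding c_def by linarith
    define \<theta>' where "\<theta>' = (1/c) *\<^sub>R \<theta>"
    have L': "((1/c)*L)-lipschitz_on UNIV (apply_bcontfun \<theta>')"
      unfolding \<theta>'_def by (rule lipschitz_scale[OF L]) (use cp in simp)
    have "norm \<theta>' = norm \<theta> / c" unfolding \<theta>'_def using cp by simp
    moreover have "lip \<theta>' \<le> L / c" using lip_facts(2)[OF L'] by simp
    ultimately have "norm \<theta>' + lip \<theta>' \<le> (norm \<theta> + L) / c" by (simp add: add_divide_distrib)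
    also have "\<dots> \<le> 1" using N cp unfolding c_def by simp
    finally have "\<theta>' \<in> BLset" unfolding BLset_def using L' by auto
    then have "blinfun_apply \<xi> \<theta>' \<le> wnorm \<xi>" unfolding wnorm_alt
      by (rule cSUP_upper[OF _ BLset_bdd])
    moreover have "blinfun_apply \<xi> \<theta> = c * blinfun_apply \<xi> \<theta>'"
      unfolding \<theta>'_def using cp by (simp add: blinfun.scaleR_right)
    ultimately show ?thesis using cp unfolding c_def by (simp add: mult.commute mult_left_mono)
  qed
qed

lemma wnorm_abs_ge:
  fixes \<theta> :: "'d::finite field"
  assumes L: "L-lipschitz_on UNIV (apply_bcontfun \<theta>)" and N: "norm \<theta> \<le> N"
  shows "\<bar>blinfun_apply \<xi> \<theta>\<bar> \<le> wnorm \<xi> * (N + L)"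
proof -
  have L2: "L-lipschitz_on UNIV (apply_bcontfun (-\<theta>))"
    using L by (auto simp: lipschitz_on_def dist_minus)
  have "blinfun_apply \<xi> (-\<theta>) \<le> wnorm \<xi> * (N + L)" by (rule wnorm_ge[OF L2]) (use N in simp)
  then show ?thesis using wnorm_ge[OF L N, of \<xi>] by (simp add: blinfun.minus_right)
qed

lemma wnorm_le:
  fixes \<xi> :: "'d::finite meas"
  assumes "\<And>\<theta> L. L-lipschitz_on UNIV (apply_bcontfun \<theta>) \<Longrightarrow> norm \<theta> + L \<le> 1 \<Longrightarrow> blinfun_apply \<xi> \<theta> \<le> c"
  shows "wnorm \<xi> \<le> c"
  unfolding wnorm_alt
proof (rule cSUP_least)
  show "BLset \<noteq> {}" using zero_BLset by auto
  fix \<theta> :: "'d field" assume "\<theta> \<in> BLset"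
  then obtain L where L: "L-lipschitz_on UNIV (apply_bcontfun \<theta>)" and n: "norm \<theta> + lip \<theta> \<le> 1"
    unfolding BLset_def by auto
  show "blinfun_apply \<xi> \<theta> \<le> c" by (rule assms[OF lip_facts(3)[OF L] n])
qed

lemma wnorm_triangle: "wnorm (a + b) \<le> wnorm a + wnorm (b::'d::finite meas)"
proof (rule wnorm_le)
  fix \<theta> :: "'d field" and L assume L: "L-lipschitz_on UNIV (apply_bcontfun \<theta>)" and n: "norm \<theta> + L \<le> 1"
  have "blinfun_apply a \<theta> \<le> wnorm a * (norm \<theta> + L)" by (rule wnorm_ge[OF L]) simp
  also have "\<dots> \<le> wnorm a" using n wnorm_nonneg[of a] by (simp add: mult_left_le)
  finally have 1: "blinfun_apply a \<theta> \<le> wnorm a" .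
  have "blinfun_apply b \<theta> \<le> wnorm b * (norm \<theta> + L)" by (rule wnorm_ge[OF L]) simp
  also have "\<dots> \<le> wnorm b" using n wnorm_nonneg[of b] by (simp add: mult_left_le)
  finally have 2: "blinfun_apply b \<theta> \<le> wnorm b" .
  show "blinfun_apply (a + b) \<theta> \<le> wnorm a + wnorm b" using 1 2 by (simp add: blinfun.add_left)
qed

lemma wnorm_uminus: "wnorm (- a) = wnorm (a::'d::finite meas)"
proof -
  have *: "wnorm (- c) \<le> wnorm c" for c :: "'d meas"
  proof (rule wnorm_le)
    fix \<theta> :: "'d field" and L assume L: "L-lipschitz_on UNIV (apply_bcontfun \<theta>)" and n: "norm \<theta> + L \<le> 1"
    have "\<bar>blinfun_apply c \<theta>\<bar> \<le> wnorm c * (norm \<theta> + L)" by (rule wnorm_abs_ge[OF L]) simp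
    also have "\<dots> \<le> wnorm c" using n wnorm_nonneg[of c] by (simp add: mult_left_le)
    finally show "blinfun_apply (- c) \<theta> \<le> wnorm c" by (simp add: blinfun.minus_left)
  qed
  show ?thesis using *[of a] *[of "-a"] by simp
qed

lemma wnorm_commute: "wnorm (a - b) = wnorm (b - a::'d::finite meas)"
  using wnorm_uminus[of "a - b"] by simp

lemma wnorm_diff_triangle: "wnorm (a - c) \<le> wnorm (a - b) + wnorm (b - c::'d::finite meas)"
  using wnorm_triangle[of "a - b" "b - c"] by simp

lemma bnd_sup:
  fixes f :: "'a \<Rightarrow> 'b::real_normed_vector"
  assumes "bounded (range f)"
  shows "norm (f y) \<le> (SUP x. norm (f x))" "0 \<le> (SUP x. norm (f x))"
proof -
  obtain K where K: "\<And>x. norm (f x) \<le> K" using assms unfolding bounded_iff by auto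
  have bdd: "bdd_above (range (\<lambda>x. norm (f x)))" by (rule bdd_aboveI2) (rule K)
  show "norm (f y) \<le> (SUP x. norm (f x))" by (rule cSUP_upper[OF _ bdd]) simp
  then show "0 \<le> (SUP x. norm (f x))" using norm_ge_zero[of "f y"] by linarith
qed

context
  fixes V :: "'d::finite R \<Rightarrow> 'd R" and M :: real
  assumes cb: "Cb2 V" and cbn: "cb2norm V \<le> M"
begin

lemma fb_V: "norm (V y) \<le> M" and fb_DV: "norm (Dsp V y) \<le> M" and fb_D2V: "norm (D2sp V y) \<le> M"
proof -
  have b1: "bounded (range V)" and b2: "bounded (range (Dsp V))" and b3: "bounded (range (D2sp V))"
    using cb unfolding Cb2_def by auto
  note s1 = bnd_sup[OF b1] and s2 = bnd_sup[OF b2] and s3 = bnd_sup[OF b3]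
  have M: "(SUP x. norm (V x)) + (SUP x. norm (Dsp V x)) + (SUP x. norm (D2sp V x)) \<le> M"
    using cbn unfolding cb2norm_def .
  show "norm (V y) \<le> M" using s1(1)[of y] s2(2) s3(2) M by linarith
  show "norm (Dsp V y) \<le> M" using s2(1)[of y] s1(2) s3(2) M by linarith
  show "norm (D2sp V y) \<le> M" using s3(1)[of y] s1(2) s2(2) M by linarith
qed

lemma fb_M0: "0 \<le> M" using fb_V[of 0] norm_ge_zero[of "V 0"] by linarith

lemma hasD_V: "(V has_derivative blinfun_apply (Dsp V y)) (at y)"
proof -
  have "V differentiable at y" using cb unfolding Cb2_def by auto
  then have d: "(V has_derivative frechet_derivative V (at y)) (at y)" by (simp add: frechet_derivative_works)
  have "blinfun_apply (Dsp V y) = frechet_derivative V (at y)"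
    unfolding Dsp_def by (rule bounded_linear_Blinfun_apply[OF has_derivative_bounded_linear[OF d]])
  then show ?thesis using d by simp
qed

lemma hasD_DV: "(Dsp V has_derivative blinfun_apply (D2sp V y)) (at y)"
proof -
  have "Dsp V differentiable at y" using cb unfolding Cb2_def by auto
  then have d: "(Dsp V has_derivative frechet_derivative (Dsp V) (at y)) (at y)" by (simp add: frechet_derivative_works)
  have "blinfun_apply (D2sp V y) = frechet_derivative (Dsp V) (at y)"
    unfolding D2sp_def by (rule bounded_linear_Blinfun_apply[OF has_derivative_bounded_linear[OF d]])
  then show ?thesis using d by simp
qed

lemma fb_lip: "norm (V a - V b) \<le> M * norm (a - b)"
  by (rule differentiable_bound[where S=UNIV and f'="\<lambda>x. blinfun_apply (Dsp V x)"])
     (auto intro: hasD_V simp: fb_DV norm_blinfun.rep_eq[symmetric])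

lemma fb_lipD: "norm (Dsp V a - Dsp V b) \<le> M * norm (a - b)"
  by (rule differentiable_bound[where S=UNIV and f'="\<lambda>x. blinfun_apply (D2sp V x)"])
     (auto intro: hasD_DV simp: fb_D2V norm_blinfun.rep_eq[symmetric])

lemma fb_taylor: "norm (V (p + y) - V p - blinfun_apply (Dsp V p) y) \<le> M * norm y ^ 2"
proof -
  have "norm (V (p + y) - V p - blinfun_apply (Dsp V p) (p + y - p)) \<le> norm (p + y - p) * (M * norm y)"
  proof (rule differentiable_bound_linearization[where S="cball p (norm y)" and f'="\<lambda>x. blinfun_apply (Dsp V x)"])
    fix t :: real assume "t \<in> {0..1}"
    then show "p + t *\<^sub>R (p + y - p) \<in> cball p (norm y)"
      by (auto simp: dist_norm mult_left_le_one_le)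
  next
    fix x assume "x \<in> cball p (norm y)"
    then have "norm (x - p) \<le> norm y" by (simp add: dist_norm norm_minus_commute)
    have "onorm (blinfun_apply (Dsp V x) - blinfun_apply (Dsp V p)) = norm (Dsp V x - Dsp V p)"
      by (simp add: norm_blinfun.rep_eq minus_blinfun.rep_eq fun_diff_def)
    also have "\<dots> \<le> M * norm (x - p)" by (rule fb_lipD)
    also have "\<dots> \<le> M * norm y" using \<open>norm (x - p) \<le> norm y\<close> fb_M0 by (simp add: mult_left_mono)
    finally show "onorm (blinfun_apply (Dsp V x) - blinfun_apply (Dsp V p)) \<le> M * norm y" .
  next
    fix x show "(V has_derivative blinfun_apply (Dsp V x)) (at x within cball p (norm y))"
      by (rule has_derivative_at_withinI[OF hasD_V])
  qed simp
  then show ?thesis by (simp add: power2_eq_square mult.commute mult.left_commute)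
qed

lemma fb_sd: "norm (V (q + a) - V q - V (p + a) + V p) \<le> M * norm (q - p) * norm a"
proof -
  have "norm ((V (q + a) - V q) - (V (p + a) - V p)) \<le> (M * norm a) * norm (q - p)"
  proof (rule differentiable_bound[where S=UNIV and f="\<lambda>s. V (s + a) - V s"
        and f'="\<lambda>s. blinfun_apply (Dsp V (s + a) - Dsp V s)"])
    fix x :: "'d R"
    have "((\<lambda>s. V (s + a)) has_derivative blinfun_apply (Dsp V (x + a))) (at x)"
      using has_derivative_compose[OF has_derivative_add[OF has_derivative_ident has_derivative_const[of a]] hasD_V[of "x + a"]]
      by (simp add: o_def)
    from has_derivative_diff[OF this hasD_V[of x]]
    show "((\<lambda>s. V (s + a) - V s) has_derivative blinfun_apply (Dsp V (x + a) - Dsp V x)) (at x within UNIV)"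
      by (simp add: minus_blinfun.rep_eq fun_diff_def)
    have "onorm (blinfun_apply (Dsp V (x + a) - Dsp V x)) = norm (Dsp V (x + a) - Dsp V x)"
      by (simp add: norm_blinfun.rep_eq)
    also have "\<dots> \<le> M * norm a" using fb_lipD[of "x + a" x] by simp
    finally show "onorm (blinfun_apply (Dsp V (x + a) - Dsp V x)) \<le> M * norm a" .
  qed auto
  then show ?thesis by (simp add: algebra_simps)
qed

end

lemma fb_diff:
  fixes V1 V2 :: "'d::finite R \<Rightarrow> 'd R"
  assumes "Cb2 V1" "Cb2 V2" "\<And>x. norm (Dsp V1 x - Dsp V2 x) \<le> D"
  shows "norm ((V1 (q + a) - V2 (q + a)) - (V1 q - V2 q)) \<le> D * norm a"
proof -
  have "cb2norm V1 \<le> cb2norm V1" by simp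
  note h1 = hasD_V[OF assms(1) this]
  have "cb2norm V2 \<le> cb2norm V2" by simp
  note h2 = hasD_V[OF assms(2) this]
  have "norm ((\<lambda>s. V1 s - V2 s) (q + a) - (\<lambda>s. V1 s - V2 s) q) \<le> D * norm (q + a - q)"
  proof (rule differentiable_bound[where S=UNIV and f'="\<lambda>s. blinfun_apply (Dsp V1 s - Dsp V2 s)"])
    fix x :: "'d R"
    show "((\<lambda>s. V1 s - V2 s) has_derivative blinfun_apply (Dsp V1 x - Dsp V2 x)) (at x within UNIV)"
      using has_derivative_diff[OF h1[of x] h2[of x]] by (simp add: minus_blinfun.rep_eq fun_diff_def)
    show "onorm (blinfun_apply (Dsp V1 x - Dsp V2 x)) \<le> D"
      using assms(3)[of x] by (simp add: norm_blinfun.rep_eq)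
  qed auto
  then show ?thesis by simp
qed

lemma sa_Cb2: "standing_assms B CB \<Longrightarrow> Cb2 (B \<xi>)"
  unfolding standing_assms_def by auto

lemma sa_CB: "standing_assms B CB \<Longrightarrow> CB > 0"
  unfolding standing_assms_def by auto

lemma sa_cb2norm: "standing_assms B CB \<Longrightarrow> cb2norm (B \<xi>) \<le> CB * (wnorm \<xi> + 1)"
  unfolding standing_assms_def by auto

lemma sa_sup:
  assumes "standing_assms B CB"
  shows "norm (B \<xi> y - B \<xi>' y) \<le> CB * wnorm (\<xi> - \<xi>')"
proof -
  have "bounded (range (B \<xi>))" "bounded (range (B \<xi>'))"
    using sa_Cb2[OF assms] unfolding Cb2_def by auto
  then have "bounded (range (\<lambda>x. B \<xi> x - B \<xi>' x))" by (rule bounded_minus_comp)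
  from bnd_sup(1)[OF this, of y] have "norm (B \<xi> y - B \<xi>' y) \<le> supnorm (\<lambda>x. B \<xi> x - B \<xi>' x)"
    unfolding supnorm_def .
  also have "\<dots> \<le> CB * wnorm (\<xi> - \<xi>')" using assms unfolding standing_assms_def by auto
  finally show ?thesis .
qed

lemma sa_supD:
  assumes "standing_assms B CB"
  shows "norm (Dsp (B \<xi>) y - Dsp (B \<xi>') y) \<le> CB * wnorm (\<xi> - \<xi>')"
proof -
  have "bounded (range (Dsp (B \<xi>)))" "bounded (range (Dsp (B \<xi>')))"
    using sa_Cb2[OF assms] unfolding Cb2_def by auto
  then have "bounded (range (\<lambda>x. Dsp (B \<xi>) x - Dsp (B \<xi>') x))" by (rule bounded_minus_comp)
  from bnd_sup(1)[OF this, of y] have "norm (Dsp (B \<xi>) y - Dsp (B \<xi>') y) \<le> (SUP x. norm (Dsp (B \<xi>) x - Dsp (B \<xi>') x))" .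
  also have "\<dots> \<le> CB * wnorm (\<xi> - \<xi>')" using assms unfolding standing_assms_def by auto
  finally show ?thesis .
qed

lemma vd_cont_on:
  assumes "\<And>s. s \<in> S \<Longrightarrow> (f has_vector_derivative f' s) (at s within S)"
  shows "continuous_on S f"
  unfolding continuous_on_eq_continuous_within using assms has_vector_derivative_continuous by blast

lemma gronwall_int:
  fixes u :: "real \<Rightarrow> real"
  assumes cont: "continuous_on {0..t1} u" and b: "b \<ge> 0"
    and le: "\<And>t. t \<in> {0..t1} \<Longrightarrow> u t \<le> a + b * integral {0..t} u"
    and t: "t \<in> {0..t1}"
  shows "u t \<le> a * exp (b * t)"
proof (cases "b = 0")
  case True then show ?thesis using le[OF t] by simp
next
  case False
  then have bp: "b > 0" using b by simp
  define F where "F s = integral {0..s} u" for s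
  have Fd: "(F has_real_derivative u s) (at s within {0..t1})" if "s \<in> {0..t1}" for s
    unfolding F_def by (rule integral_has_real_derivative[OF cont that])
  have Fc: "continuous_on {0..t1} F"
    unfolding F_def by (rule indefinite_integral_continuous_1[OF integrable_continuous_real[OF cont]])
  define H where "H = (\<lambda>r. exp (- (b*r)) * (F r + a/b))"
  have "H t \<le> H 0"
  proof (rule DERIV_nonpos_imp_decreasing_open[of 0 t H])
    show "0 \<le> t" using t by simp
    show "continuous_on {0..t} H" unfolding H_def
      by (intro continuous_intros continuous_on_subset[OF Fc]) (use t in auto)
    fix x assume x: "0 < x" "x < t"
    then have "x \<in> {0..t1}" using t by auto
    have "at x within {0..t1} = at x" by (rule at_within_Icc_at) (use x t in auto)
    then have Fdx: "(F has_real_derivative u x) (at x)" using Fd[OF \<open>x \<in> {0..t1}\<close>] by simp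
    have "(H has_real_derivative (exp (- (b*x)) * (-b)) * (F x + a/b) + exp (- (b*x)) * u x) (at x)"
      unfolding H_def
      by (auto intro!: derivative_eq_intros Fdx)
    moreover have "(exp (- (b*x)) * (-b)) * (F x + a/b) + exp (- (b*x)) * u x = exp (- (b*x)) * (u x - b * F x - a)"
      using bp by (simp add: field_simps)
    moreover have "exp (- (b*x)) * (u x - b * F x - a) \<le> 0"
      using le[OF \<open>x \<in> {0..t1}\<close>] unfolding F_def by (simp add: mult_nonneg_nonpos)
    ultimately show "\<exists>y. (H has_real_derivative y) (at x) \<and> y \<le> 0" by auto
  qed
  moreover have "H 0 = a / b" unfolding H_def F_def by simp
  ultimately have "exp (- (b*t)) * (F t + a/b) \<le> a / b" unfolding H_def by simp
  then have "exp (b*t) * (exp (- (b*t)) * (F t + a/b)) \<le> exp (b*t) * (a / b)"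
    by (rule mult_left_mono) simp
  moreover have "exp (b*t) * (exp (- (b*t)) * X) = X" for X
    by (metis exp_minus_inverse mult.assoc mult.left_neutral)
  ultimately have "F t + a/b \<le> exp (b*t) * (a / b)" by simp
  then have "b * (F t + a/b) \<le> b * (exp (b*t) * (a / b))" using bp by (rule mult_left_mono[OF _ less_imp_le])
  moreover have "b * (F t + a/b) = b * F t + a" using bp by (simp add: field_simps)
  moreover have "b * (exp (b*t) * (a / b)) = a * exp (b*t)" using bp by (simp add: field_simps)
  ultimately have "b * F t \<le> a * exp (b*t) - a" by simp
  then show ?thesis using le[OF t] unfolding F_def by simp
qed

lemma ode_gronwall:
  fixes f :: "real \<Rightarrow> 'a::euclidean_space"
  assumes t1: "0 \<le> t1"
    and df: "\<And>s. s \<in> {0..t1} \<Longrightarrow> (f has_vector_derivative f' s) (at s within {0..t1})"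
    and bd: "\<And>s. s \<in> {0..t1} \<Longrightarrow> norm (f' s) \<le> L * norm (f s) + g s"
    and gc: "continuous_on {0..t1} g" and g0: "\<And>s. s \<in> {0..t1} \<Longrightarrow> 0 \<le> g s" and L: "0 \<le> L"
  shows "norm (f t1) \<le> (norm (f 0) + integral {0..t1} g) * exp (L * t1)"
proof -
  have fc: "continuous_on {0..t1} f" by (rule vd_cont_on[OF df])
  have nfc: "continuous_on {0..t1} (\<lambda>s. norm (f s))" by (intro continuous_intros fc)
  have "norm (f s) \<le> (norm (f 0) + integral {0..t1} g) + L * integral {0..s} (\<lambda>s. norm (f s))"
    if s: "s \<in> {0..t1}" for s
  proof -
    have sub: "{0..s} \<subseteq> {0..t1}" using s by auto
    have "(f' has_integral (f s - f 0)) {0..s}"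
      by (rule fundamental_theorem_of_calculus) (use s in \<open>auto intro: has_vector_derivative_within_subset[OF df] \<close>)
    then have fi: "f' integrable_on {0..s}" and fe: "integral {0..s} f' = f s - f 0"
      by (auto simp: has_integral_integrable_integral)
    have nfi: "(\<lambda>s. norm (f s)) integrable_on {0..s}"
      by (rule integrable_continuous_real[OF continuous_on_subset[OF nfc sub]])
    have gi: "g integrable_on {0..s}"
      by (rule integrable_continuous_real[OF continuous_on_subset[OF gc sub]])
    have gi1: "g integrable_on {0..t1}" by (rule integrable_continuous_real[OF gc])
    have "norm (f s - f 0) \<le> integral {0..s} (\<lambda>r. L * norm (f r) + g r)"
      unfolding fe[symmetric]
      by (rule integral_norm_bound_integral[OF fi]) (use nfi gi sub in \<open>auto intro!: integrable_add integrable_continuous_real continuous_on_subset[OF nfc sub] continuous_on_subset[OF gc sub] continuous_intros bd\<close>)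
    also have "\<dots> = L * integral {0..s} (\<lambda>r. norm (f r)) + integral {0..s} g"
      using nfi gi by (simp add: integral_add integrable_continuous_real continuous_on_subset[OF nfc sub] continuous_intros)
    also have "integral {0..s} g \<le> integral {0..t1} g"
      by (rule integral_subset_le[OF sub gi gi1]) (use g0 in auto)
    finally have "norm (f s - f 0) \<le> L * integral {0..s} (\<lambda>r. norm (f r)) + integral {0..t1} g" by simp
    moreover have "norm (f s) \<le> norm (f 0) + norm (f s - f 0)" by (rule norm_triangle_sub)
    ultimately show ?thesis by simp
  qed
  from gronwall_int[OF nfc L this] t1 show ?thesis by simp
qed

lemma le_eps_lemma:
  fixes x y z :: real
  assumes "\<And>h. h > 0 \<Longrightarrow> x \<le> y + h * z" and "z \<ge> 0"
  shows "x \<le> y"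
proof (rule ccontr)
  assume "\<not> x \<le> y"
  then have d: "x - y > 0" by simp
  define h where "h = (x - y) / (2 * (z + 1))"
  have hp: "h > 0" unfolding h_def using d assms(2) by simp
  have "h * z < x - y"
  proof -
    have "h * z \<le> h * (z + 1)" using hp by simp
    also have "\<dots> = (x - y) / 2" unfolding h_def using assms(2) by (simp add: field_simps)
    also have "\<dots> < x - y" using d by simp
    finally show ?thesis .
  qed
  then show False using assms(1)[OF hp] by simp
qed

lemma hyers:
  fixes \<Delta> :: "'a::euclidean_space \<Rightarrow> 'b::euclidean_space"
  assumes K0: "K \<ge> 0"
    and def: "\<And>r1 r2 w1 w2. norm (\<Delta> (r1 *\<^sub>R w1 + r2 *\<^sub>R w2) - r1 *\<^sub>R \<Delta> w1 - r2 *\<^sub>R \<Delta> w2)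
          \<le> K * (norm (r1 *\<^sub>R w1 + r2 *\<^sub>R w2) ^ 2 + \<bar>r1\<bar> * norm w1 ^ 2 + \<bar>r2\<bar> * norm w2 ^ 2)"
  shows "\<exists>A. linear A \<and> (\<forall>v. norm (\<Delta> v - A v) \<le> 3 * K * norm v ^ 2)"
proof -
  define a where "a k v = (2::real) ^ k *\<^sub>R \<Delta> ((1 / 2 ^ k) *\<^sub>R v)" for k v
  define d where "d v k = a (Suc k) v - a k v" for v k
  have step: "norm (d v k) \<le> (3/2 * K * norm v ^ 2) * (1/2) ^ k" for v k
  proof -
    define w where "w = (1 / 2 ^ Suc k) *\<^sub>R v"
    have 2: "(1 / 2 ^ k) *\<^sub>R v = 1 *\<^sub>R w + 1 *\<^sub>R w" unfolding w_def by (simp add: scaleR_2[symmetric])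
    have "d v k = 2 ^ k *\<^sub>R (2 *\<^sub>R \<Delta> w - \<Delta> ((1 / 2 ^ k) *\<^sub>R v))"
      unfolding d_def a_def w_def by (simp add: algebra_simps)
    then have "norm (d v k) = 2 ^ k * norm (2 *\<^sub>R \<Delta> w - \<Delta> ((1 / 2 ^ k) *\<^sub>R v))" by simp
    also have "2 ^ k * norm (2 *\<^sub>R \<Delta> w - \<Delta> ((1 / 2 ^ k) *\<^sub>R v)) = 2 ^ k * norm (\<Delta> (1 *\<^sub>R w + 1 *\<^sub>R w) - 1 *\<^sub>R \<Delta> w - 1 *\<^sub>R \<Delta> w)"
      unfolding 2 by (subst norm_minus_commute) (simp add: scaleR_2 diff_diff_eq)
    also have "\<dots> \<le> 2 ^ k * (K * (norm (1 *\<^sub>R w + 1 *\<^sub>R w) ^ 2 + \<bar>1\<bar> * norm w ^ 2 + \<bar>1\<bar> * norm w ^ 2))"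
      by (rule mult_left_mono[OF def]) simp
    also have "norm (1 *\<^sub>R w + 1 *\<^sub>R w) = 2 * norm w" by (simp flip: scaleR_2)
    also have "norm w = norm v / 2 ^ Suc k" unfolding w_def by simp
    also have "2 ^ k * (K * ((2 * (norm v / 2 ^ Suc k))\<^sup>2 + \<bar>1\<bar> * (norm v / 2 ^ Suc k)\<^sup>2 + \<bar>1\<bar> * (norm v / 2 ^ Suc k)\<^sup>2))
        = (3/2 * K * norm v ^ 2) * (1/2) ^ k"
      by (simp add: field_simps power2_eq_square power_mult_distrib)
    finally show ?thesis .
  qed
  have gs: "summable (\<lambda>k. (3/2 * K * norm v ^ 2) * (1/2::real) ^ k)" for v
    by (intro summable_mult summable_geometric) simp
  have sm: "summable (d v)" for v
    by (rule summable_comparison_test'[where N=0, OF gs]) (rule step)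
  have smn: "summable (\<lambda>k. norm (d v k))" for v
    by (rule summable_comparison_test'[where N=0, OF gs]) (use step[of v] in simp)
  define A where "A v = \<Delta> v + suminf (d v)" for v
  have a0: "a 0 v = \<Delta> v" for v unfolding a_def by simp
  have tel: "a k v = \<Delta> v + (\<Sum>j<k. d v j)" for k v
    unfolding d_def using sum_lessThan_telescope[of "\<lambda>j. a j v" k] a0[of v] by simp
  have lim: "(\<lambda>k. a k v) \<longlonglongrightarrow> A v" for v
    unfolding tel A_def by (intro tendsto_add tendsto_const summable_LIMSEQ[OF sm])
  have bnd: "norm (\<Delta> v - A v) \<le> 3 * K * norm v ^ 2" for v
  proof -
    have "norm (\<Delta> v - A v) = norm (suminf (d v))" unfolding A_def by (simp add: norm_minus_commute)
    also have "\<dots> \<le> (\<Sum>k. norm (d v k))" by (rule summable_norm[OF smn])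
    also have "\<dots> \<le> (\<Sum>k. (3/2 * K * norm v ^ 2) * (1/2) ^ k)"
      by (rule suminf_le[OF step smn]) (auto intro: summable_mult)
    also have "\<dots> = (3/2 * K * norm v ^ 2) * (\<Sum>k. (1/2::real) ^ k)"
      by (rule suminf_mult) (rule summable_geometric, simp)
    also have "\<dots> = 3 * K * norm v ^ 2"
      using suminf_geometric[of "1/2::real"] by simp
    finally show ?thesis .
  qed
  have lin: "A (r1 *\<^sub>R u + r2 *\<^sub>R v) = r1 *\<^sub>R A u + r2 *\<^sub>R A v" for r1 r2 u v
  proof -
    define Q where "Q = norm (r1 *\<^sub>R u + r2 *\<^sub>R v) ^ 2 + \<bar>r1\<bar> * norm u ^ 2 + \<bar>r2\<bar> * norm v ^ 2"
    have L1: "(\<lambda>k. a k (r1 *\<^sub>R u + r2 *\<^sub>R v) - r1 *\<^sub>R a k u - r2 *\<^sub>R a k v) \<longlonglongrightarrow> A (r1 *\<^sub>R u + r2 *\<^sub>R v) - r1 *\<^sub>R A u - r2 *\<^sub>R A v"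
      by (intro tendsto_diff tendsto_scaleR tendsto_const lim)
    have e: "norm (a k (r1 *\<^sub>R u + r2 *\<^sub>R v) - r1 *\<^sub>R a k u - r2 *\<^sub>R a k v) \<le> K * Q * (1/2) ^ k" for k
    proof -
      define u' where "u' = (1 / 2 ^ k) *\<^sub>R u"
      define v' where "v' = (1 / 2 ^ k) *\<^sub>R v"
      have eq: "(1 / 2 ^ k) *\<^sub>R (r1 *\<^sub>R u + r2 *\<^sub>R v) = r1 *\<^sub>R u' + r2 *\<^sub>R v'"
        unfolding u'_def v'_def by (simp add: algebra_simps)
      have "a k (r1 *\<^sub>R u + r2 *\<^sub>R v) - r1 *\<^sub>R a k u - r2 *\<^sub>R a k v
          = 2 ^ k *\<^sub>R (\<Delta> (r1 *\<^sub>R u' + r2 *\<^sub>R v') - r1 *\<^sub>R \<Delta> u' - r2 *\<^sub>R \<Delta> v')"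
        unfolding a_def eq u'_def v'_def by (simp add: algebra_simps)
      then have "norm (a k (r1 *\<^sub>R u + r2 *\<^sub>R v) - r1 *\<^sub>R a k u - r2 *\<^sub>R a k v)
          = 2 ^ k * norm (\<Delta> (r1 *\<^sub>R u' + r2 *\<^sub>R v') - r1 *\<^sub>R \<Delta> u' - r2 *\<^sub>R \<Delta> v')" by simp
      also have "\<dots> \<le> 2 ^ k * (K * (norm (r1 *\<^sub>R u' + r2 *\<^sub>R v') ^ 2 + \<bar>r1\<bar> * norm u' ^ 2 + \<bar>r2\<bar> * norm v' ^ 2))"
        by (rule mult_left_mono[OF def]) simp
      also have "norm (r1 *\<^sub>R u' + r2 *\<^sub>R v') = norm (r1 *\<^sub>R u + r2 *\<^sub>R v) / 2 ^ k"
        unfolding eq[symmetric] by simp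
      also have "norm u' = norm u / 2 ^ k" unfolding u'_def by simp
      also have "norm v' = norm v / 2 ^ k" unfolding v'_def by simp
      also have "2 ^ k * (K * ((norm (r1 *\<^sub>R u + r2 *\<^sub>R v) / 2 ^ k)\<^sup>2 + \<bar>r1\<bar> * (norm u / 2 ^ k)\<^sup>2 + \<bar>r2\<bar> * (norm v / 2 ^ k)\<^sup>2))
          = K * Q * (1/2) ^ k"
        unfolding Q_def by (simp add: field_simps power2_eq_square power_mult_distrib)
      finally show ?thesis .
    qed
    have L2: "(\<lambda>k. a k (r1 *\<^sub>R u + r2 *\<^sub>R v) - r1 *\<^sub>R a k u - r2 *\<^sub>R a k v) \<longlonglongrightarrow> 0"
    proof (rule Lim_null_comparison[OF _ ])
      show "\<forall>\<^sub>F k in sequentially. norm (a k (r1 *\<^sub>R u + r2 *\<^sub>R v) - r1 *\<^sub>R a k u - r2 *\<^sub>R a k v) \<le> K * Q * (1/2) ^ k"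
        using e by simp
      show "(\<lambda>k. K * Q * (1/2::real) ^ k) \<longlonglongrightarrow> 0"
        by (intro tendsto_mult_right_zero LIMSEQ_power_zero) simp
    qed
    from LIMSEQ_unique[OF L1 L2] show ?thesis by (simp add: algebra_simps)
  qed
  have "linear A"
  proof (rule linearI)
    fix x y show "A (x + y) = A x + A y" using lin[of 1 x 1 y] by simp
    fix c x show "A (c *\<^sub>R x) = c *\<^sub>R A x" using lin[of c x 0 0] by simp
  qed
  then show ?thesis using bnd by blast
qed

lemma lin_compare:
  fixes A A' :: "'a::real_normed_vector \<Rightarrow> 'b::real_normed_vector"
  assumes "linear A" "linear A'"
    and "\<And>w. norm (\<Delta> w - A w) \<le> K * norm w ^ 2" "\<And>w. norm (\<Delta>' w - A' w) \<le> K * norm w ^ 2"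
    and "\<And>w. norm (\<Delta> w - \<Delta>' w) \<le> c * norm w" and K0: "K \<ge> 0"
  shows "norm (A v - A' v) \<le> c * norm v"
proof (rule le_eps_lemma)
  show "0 \<le> 2 * K * norm v ^ 2" using K0 by simp
  fix h :: real assume hp: "h > 0"
  have "A (h *\<^sub>R v) - A' (h *\<^sub>R v) = (\<Delta>' (h *\<^sub>R v) - A' (h *\<^sub>R v)) - (\<Delta> (h *\<^sub>R v) - A (h *\<^sub>R v)) + (\<Delta> (h *\<^sub>R v) - \<Delta>' (h *\<^sub>R v))"
    by (simp add: algebra_simps)
  then have "norm (A (h *\<^sub>R v) - A' (h *\<^sub>R v)) \<le> K * norm (h *\<^sub>R v) ^ 2 + K * norm (h *\<^sub>R v) ^ 2 + c * norm (h *\<^sub>R v)"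
  proof -
    have "norm ((\<Delta>' (h *\<^sub>R v) - A' (h *\<^sub>R v)) - (\<Delta> (h *\<^sub>R v) - A (h *\<^sub>R v)) + (\<Delta> (h *\<^sub>R v) - \<Delta>' (h *\<^sub>R v)))
      \<le> norm (\<Delta>' (h *\<^sub>R v) - A' (h *\<^sub>R v)) + norm (\<Delta> (h *\<^sub>R v) - A (h *\<^sub>R v)) + norm (\<Delta> (h *\<^sub>R v) - \<Delta>' (h *\<^sub>R v))"
      by (rule order_trans[OF norm_triangle_ineq]) (simp add: norm_triangle_ineq4 add_right_mono)
    then show ?thesis using assms(3,4,5)[of "h *\<^sub>R v"] \<open>A (h *\<^sub>R v) - A' (h *\<^sub>R v) = _\<close> by (simp only:)
  qed
  moreover have "A (h *\<^sub>R v) - A' (h *\<^sub>R v) = h *\<^sub>R (A v - A' v)"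
    using linear_scale[OF assms(1)] linear_scale[OF assms(2)] by (simp add: algebra_simps)
  ultimately have "norm (h *\<^sub>R (A v - A' v)) \<le> K * norm (h *\<^sub>R v) ^ 2 + K * norm (h *\<^sub>R v) ^ 2 + c * norm (h *\<^sub>R v)"
    by simp
  then have "h * norm (A v - A' v) \<le> h * (c * norm v + h * (2 * K * norm v ^ 2))"
    using hp by (simp only: norm_scaleR abs_of_pos) (simp add: power2_eq_square algebra_simps)
  then show "norm (A v - A' v) \<le> c * norm v + h * (2 * K * norm v ^ 2)" using hp by simp
qed

lemma hyers_deriv:
  fixes f :: "'a::euclidean_space \<Rightarrow> 'b::euclidean_space"
  assumes "linear A" "\<And>v. norm (f (x + v) - f x - A v) \<le> K * norm v ^ 2"
  shows "(f has_derivative A) (at x)"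
proof -
  have bl: "bounded_linear A" using assms(1) by (simp add: linear_conv_bounded_linear)
  show ?thesis
    unfolding has_derivative_at_alt
  proof (intro conjI bl allI impI)
    fix e :: real assume e: "e > 0"
    define d where "d = e / (\<bar>K\<bar> + 1)"
    have dp: "d > 0" unfolding d_def using e by simp
    show "\<exists>d>0. \<forall>y. norm (y - x) < d \<longrightarrow> norm (f y - f x - A (y - x)) \<le> e * norm (y - x)"
    proof (intro exI[of _ d] conjI dp allI impI)
      fix y assume y: "norm (y - x) < d"
      have "norm (f y - f x - A (y - x)) \<le> K * norm (y - x) ^ 2" using assms(2)[of "y - x"] by simp
      also have "\<dots> \<le> (\<bar>K\<bar> + 1) * norm (y - x) * norm (y - x)"
        using mult_right_mono[of K "\<bar>K\<bar>+1" "norm (y-x) * norm (y-x)"] by (simp add: power2_eq_square mult.assoc)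
      also have "\<dots> \<le> (\<bar>K\<bar> + 1) * d * norm (y - x)"
        using y by (intro mult_right_mono mult_left_mono) auto
      also have "(\<bar>K\<bar> + 1) * d = e" unfolding d_def by simp
      finally show "norm (f y - f x - A (y - x)) \<le> e * norm (y - x)" .
    qed
  qed
qed

lemma hvd_scale: "(g has_vector_derivative g') F \<Longrightarrow> ((\<lambda>x. r *\<^sub>R g x) has_vector_derivative r *\<^sub>R g') F"
  by (rule bounded_linear.has_vector_derivative[OF bounded_linear_scaleR_right])

lemma pq_cancel: "p + (q - p) = (q::'a::ab_group_add)" by simp

lemma lin_id3:
  fixes L :: "'a::real_vector \<Rightarrow> 'b::real_vector"
  assumes "linear L"
  shows "(Vu - Vp) - r1 *\<^sub>R (V1 - Vp) - r2 *\<^sub>R (V2 - Vp)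
    = L (yu - r1 *\<^sub>R y1 - r2 *\<^sub>R y2) + ((Vu - Vp - L yu) - r1 *\<^sub>R (V1 - Vp - L y1) - r2 *\<^sub>R (V2 - Vp - L y2))"
proof -
  have "L (yu - r1 *\<^sub>R y1 - r2 *\<^sub>R y2) = L yu - r1 *\<^sub>R L y1 - r2 *\<^sub>R L y2"
    using assms by (simp add: linear_diff linear_scale)
  then show ?thesis by (simp add: algebra_simps)
qed

locale flow_ctx =
  fixes V :: "real \<Rightarrow> 'd::finite R \<Rightarrow> 'd R" and \<phi> :: "real \<Rightarrow> 'd R \<Rightarrow> 'd R"
    and t1 T0 M :: real
  assumes phi0: "\<And>x. \<phi> 0 x = x"
    and ode: "\<And>x s. s \<in> {0..t1} \<Longrightarrow> ((\<lambda>s. \<phi> s x) has_vector_derivative V s (\<phi> s x)) (at s within {0..t1})"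
    and cbV: "\<And>s. s \<in> {0..t1} \<Longrightarrow> Cb2 (V s)"
    and cbM: "\<And>s. s \<in> {0..t1} \<Longrightarrow> cb2norm (V s) \<le> M"
    and t1: "0 \<le> t1" "t1 \<le> T0"
    and M0: "0 \<le> M"
begin

definition "EE = exp (M * T0)"

lemma EE_ge1: "1 \<le> EE" unfolding EE_def using M0 t1 by simp
lemma EE_pos: "0 < EE" using EE_ge1 by simp
lemma exp_le_EE: "t \<in> {0..t1} \<Longrightarrow> exp (M * t) \<le> EE"
  unfolding EE_def using M0 t1 by (auto intro: mult_left_mono)

lemma odeD: "t \<in> {0..t1} \<Longrightarrow> s \<in> {0..t} \<Longrightarrow> ((\<lambda>s. \<phi> s x) has_vector_derivative V s (\<phi> s x)) (at s within {0..t})"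
  by (rule has_vector_derivative_within_subset[OF ode]) auto

lemma sub01: "t \<in> {0..t1} \<Longrightarrow> s \<in> {0..t} \<Longrightarrow> s \<in> {0..t1}" by auto

lemma V_lip: "s \<in> {0..t1} \<Longrightarrow> norm (V s a - V s b) \<le> M * norm (a - b)"
  by (rule fb_lip[OF cbV cbM])

lemma flow_lip:
  assumes t: "t \<in> {0..t1}"
  shows "norm (\<phi> t x - \<phi> t y) \<le> EE * norm (x - y)"
proof -
  have "norm (\<phi> t x - \<phi> t y) \<le> (norm (\<phi> 0 x - \<phi> 0 y) + integral {0..t} (\<lambda>s. 0)) * exp (M * t)"
  proof (rule ode_gronwall[where f="\<lambda>s. \<phi> s x - \<phi> s y" and f'="\<lambda>s. V s (\<phi> s x) - V s (\<phi> s y)"])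
    show "0 \<le> t" using t by simp
    fix s assume s: "s \<in> {0..t}"
    show "((\<lambda>s. \<phi> s x - \<phi> s y) has_vector_derivative V s (\<phi> s x) - V s (\<phi> s y)) (at s within {0..t})"
      by (intro has_vector_derivative_diff odeD[OF t s])
    show "norm (V s (\<phi> s x) - V s (\<phi> s y)) \<le> M * norm (\<phi> s x - \<phi> s y) + 0"
      using V_lip[OF sub01[OF t s]] by simp
  qed (use M0 in auto)
  also have "\<dots> = norm (x - y) * exp (M * t)" by (simp add: phi0)
  also have "\<dots> \<le> norm (x - y) * EE" by (rule mult_left_mono[OF exp_le_EE[OF t]]) simp
  finally show ?thesis by (simp add: mult.commute)
qed

definition "Dl t x w = \<phi> t (x + w) - \<phi> t x"

lemma Dl_bound: "t \<in> {0..t1} \<Longrightarrow> norm (Dl t x w) \<le> EE * norm w"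
  unfolding Dl_def using flow_lip[of t "x + w" x] by simp

definition "Kdef = T0 * M * EE ^ 3"

lemma Kdef_nonneg: "0 \<le> Kdef" unfolding Kdef_def using t1 M0 EE_pos by simp

lemma defect:
  assumes t: "t \<in> {0..t1}"
  shows "norm (Dl t x (r1 *\<^sub>R w1 + r2 *\<^sub>R w2) - r1 *\<^sub>R Dl t x w1 - r2 *\<^sub>R Dl t x w2)
    \<le> Kdef * (norm (r1 *\<^sub>R w1 + r2 *\<^sub>R w2) ^ 2 + \<bar>r1\<bar> * norm w1 ^ 2 + \<bar>r2\<bar> * norm w2 ^ 2)"
proof -
  define u where "u = r1 *\<^sub>R w1 + r2 *\<^sub>R w2"
  define Q where "Q = norm u ^ 2 + \<bar>r1\<bar> * norm w1 ^ 2 + \<bar>r2\<bar> * norm w2 ^ 2"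
  have Q0: "0 \<le> Q" unfolding Q_def by simp
  define f where "f s = Dl s x u - r1 *\<^sub>R Dl s x w1 - r2 *\<^sub>R Dl s x w2" for s
  define f' where "f' s = (V s (\<phi> s (x + u)) - V s (\<phi> s x)) - r1 *\<^sub>R (V s (\<phi> s (x + w1)) - V s (\<phi> s x))
       - r2 *\<^sub>R (V s (\<phi> s (x + w2)) - V s (\<phi> s x))" for s
  have "norm (f t) \<le> (norm (f 0) + integral {0..t} (\<lambda>s. M * EE ^ 2 * Q)) * exp (M * t)"
  proof (rule ode_gronwall[where f'=f'])
    show "0 \<le> t" using t by simp
    fix s assume s: "s \<in> {0..t}"
    note s1 = sub01[OF t s]
    show "(f has_vector_derivative f' s) (at s within {0..t})"
      unfolding f_def f'_def Dl_def
      by (intro has_vector_derivative_diff hvd_scale odeD[OF t s])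
    define p where "p = \<phi> s x"
    define R where "R y = V s (p + y) - V s p - blinfun_apply (Dsp (V s) p) y" for y
    have Rb: "norm (R y) \<le> M * norm y ^ 2" for y unfolding R_def by (rule fb_taylor[OF cbV[OF s1] cbM[OF s1]])
    have e: "f' s = blinfun_apply (Dsp (V s) p) (f s) + (R (Dl s x u) - r1 *\<^sub>R R (Dl s x w1) - r2 *\<^sub>R R (Dl s x w2))"
      unfolding f'_def f_def R_def Dl_def p_def
      by (simp only: pq_cancel) (rule lin_id3, simp add: blinfun.bounded_linear_right bounded_linear.linear)
    have "norm (f' s) \<le> norm (blinfun_apply (Dsp (V s) p) (f s)) + (norm (R (Dl s x u)) + \<bar>r1\<bar> * norm (R (Dl s x w1)) + \<bar>r2\<bar> * norm (R (Dl s x w2)))"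
      unfolding e
      by (rule order_trans[OF norm_triangle_ineq add_left_mono])
         (rule order_trans[OF norm_triangle_ineq4], rule add_mono[OF order_trans[OF norm_triangle_ineq4]], auto)
    also have "norm (blinfun_apply (Dsp (V s) p) (f s)) \<le> M * norm (f s)"
      using norm_blinfun[of "Dsp (V s) p" "f s"] fb_DV[OF cbV[OF s1] cbM[OF s1], of p]
      by (meson mult_right_mono norm_ge_zero order_trans)
    also have "norm (R (Dl s x u)) + \<bar>r1\<bar> * norm (R (Dl s x w1)) + \<bar>r2\<bar> * norm (R (Dl s x w2))
       \<le> M * (EE * norm u) ^ 2 + \<bar>r1\<bar> * (M * (EE * norm w1) ^ 2) + \<bar>r2\<bar> * (M * (EE * norm w2) ^ 2)"
    proof -
      have sq: "M * norm (Dl s x y) ^ 2 \<le> M * (EE * norm y) ^ 2" for y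
        using Dl_bound[OF s1, of x y] M0 by (intro mult_left_mono power_mono) auto
      show ?thesis using order_trans[OF Rb sq] by (intro add_mono mult_left_mono) auto
    qed
    also have "M * (EE * norm u) ^ 2 + \<bar>r1\<bar> * (M * (EE * norm w1) ^ 2) + \<bar>r2\<bar> * (M * (EE * norm w2) ^ 2) = M * EE ^ 2 * Q"
      unfolding Q_def by (simp add: power_mult_distrib algebra_simps)
    finally show "norm (f' s) \<le> M * norm (f s) + M * EE ^ 2 * Q" by simp
  qed (use M0 Q0 in auto)
  also have "f 0 = 0" unfolding f_def Dl_def u_def by (simp add: phi0)
  also have "(norm 0 + integral {0..t} (\<lambda>s. M * EE ^ 2 * Q)) * exp (M * t) = t * M * EE ^ 2 * Q * exp (M * t)"
    using t by simp
  also have "\<dots> \<le> T0 * M * EE ^ 2 * Q * EE"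
    using t t1 M0 Q0 exp_le_EE[OF t] by (intro mult_mono) auto
  also have "\<dots> = Kdef * Q" unfolding Kdef_def by (simp add: power3_eq_cube power2_eq_square)
  finally show ?thesis unfolding f_def u_def Q_def .
qed

definition "Dphi t x = frechet_derivative (\<phi> t) (at x)"

lemma Dphi_props:
  assumes t: "t \<in> {0..t1}"
  shows "linear (Dphi t x)" "\<And>v. norm (Dl t x v - Dphi t x v) \<le> 3 * Kdef * norm v ^ 2"
    "(\<phi> t has_derivative Dphi t x) (at x)"
proof -
  obtain A where A: "linear A" "\<And>v. norm (Dl t x v - A v) \<le> 3 * Kdef * norm v ^ 2"
    using hyers[OF Kdef_nonneg defect[OF t, of x]] by blast
  have d: "(\<phi> t has_derivative A) (at x)"
    by (rule hyers_deriv[OF A(1)]) (use A(2) in \<open>simp add: Dl_def\<close>)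
  then have "A = Dphi t x" unfolding Dphi_def by (rule frechet_derivative_at)
  then show "linear (Dphi t x)" "\<And>v. norm (Dl t x v - Dphi t x v) \<le> 3 * Kdef * norm v ^ 2"
    "(\<phi> t has_derivative Dphi t x) (at x)" using A d by auto
qed

lemma Dphi_bound:
  assumes t: "t \<in> {0..t1}"
  shows "norm (Dphi t x v) \<le> EE * norm v"
proof -
  show ?thesis
    using lin_compare[where \<Delta>="Dl t x" and \<Delta>'="\<lambda>_. 0" and K="3 * Kdef" and A="Dphi t x" and A'="\<lambda>_. 0" and c=EE]
     Dphi_props[OF t] Dl_bound[OF t] Kdef_nonneg by (simp add: linear_zero)
qed

definition "Klip = T0 * M * EE ^ 3"

lemma Dl_lip:
  assumes t: "t \<in> {0..t1}"
  shows "norm (Dl t x w - Dl t y w) \<le> Klip * norm (x - y) * norm w"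
proof -
  define f where "f s = Dl s x w - Dl s y w" for s
  define f' where "f' s = (V s (\<phi> s (x + w)) - V s (\<phi> s x)) - (V s (\<phi> s (y + w)) - V s (\<phi> s y))" for s
  define c where "c = M * EE ^ 2 * norm (x - y) * norm w"
  have c0: "0 \<le> c" unfolding c_def using M0 by simp
  have "norm (f t) \<le> (norm (f 0) + integral {0..t} (\<lambda>s. c)) * exp (M * t)"
  proof (rule ode_gronwall[where f'=f'])
    show "0 \<le> t" using t by simp
    fix s assume s: "s \<in> {0..t}"
    note s1 = sub01[OF t s]
    show "(f has_vector_derivative f' s) (at s within {0..t})"
      unfolding f_def f'_def Dl_def
      by (intro has_vector_derivative_diff odeD[OF t s])
    define p where "p = \<phi> s x"
    define q where "q = \<phi> s y"
    define a where "a = Dl s x w"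
    define b where "b = Dl s y w"
    have e: "f' s = (V s (p + a) - V s p - V s (q + a) + V s q) + (V s (q + a) - V s (q + b))"
      unfolding f'_def p_def q_def a_def b_def Dl_def by simp
    have 1: "norm (V s (p + a) - V s p - V s (q + a) + V s q) \<le> M * norm (p - q) * norm a"
      by (rule fb_sd[OF cbV[OF s1] cbM[OF s1]])
    have 2: "norm (V s (q + a) - V s (q + b)) \<le> M * norm (f s)"
      using V_lip[OF s1, of "q + a" "q + b"] unfolding f_def a_def b_def by simp
    have 3: "M * norm (p - q) * norm a \<le> c"
    proof -
      have "norm (p - q) \<le> EE * norm (x - y)" unfolding p_def q_def by (rule flow_lip[OF s1])
      moreover have "norm a \<le> EE * norm w" unfolding a_def by (rule Dl_bound[OF s1])
      ultimately have "norm (p - q) * norm a \<le> (EE * norm (x - y)) * (EE * norm w)"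
        using EE_pos by (intro mult_mono) auto
      then show ?thesis unfolding c_def using M0
        by (simp add: power2_eq_square mult.assoc mult.left_commute mult_left_mono)
    qed
    have "norm (f' s) \<le> norm (V s (p + a) - V s p - V s (q + a) + V s q) + norm (V s (q + a) - V s (q + b))"
      unfolding e by (rule norm_triangle_ineq)
    then show "norm (f' s) \<le> M * norm (f s) + c" using 1 2 3 by linarith
  qed (use M0 c0 in auto)
  also have "f 0 = 0" unfolding f_def Dl_def by (simp add: phi0)
  also have "(norm 0 + integral {0..t} (\<lambda>s. c)) * exp (M * t) = t * c * exp (M * t)"
    using t by simp
  also have "\<dots> \<le> T0 * c * EE"
    using t t1 c0 exp_le_EE[OF t] by (intro mult_mono) auto
  also have "\<dots> = Klip * norm (x - y) * norm w" unfolding Klip_def c_def by (simp add: power3_eq_cube power2_eq_square)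
  finally show ?thesis unfolding f_def .
qed

lemma Dphi_lip:
  assumes t: "t \<in> {0..t1}"
  shows "norm (Dphi t x v - Dphi t y v) \<le> Klip * norm (x - y) * norm v"
  using lin_compare[where \<Delta>="Dl t x" and \<Delta>'="Dl t y" and K="3 * Kdef" and A="Dphi t x" and A'="Dphi t y"
      and c="Klip * norm (x - y)"]
    Dphi_props[OF t] Dl_lip[OF t] Kdef_nonneg by (simp add: mult.assoc)

end

locale flow_pair = f1: flow_ctx V1 \<phi>1 t1 T0 M + f2: flow_ctx V2 \<phi>2 t1 T0 M
  for V1 \<phi>1 V2 \<phi>2 :: "real \<Rightarrow> 'd::finite R \<Rightarrow> 'd R" and t1 T0 M +
  fixes w :: "real \<Rightarrow> real" and CB :: real
  assumes wc: "continuous_on {0..t1} w" and w0: "\<And>s. s \<in> {0..t1} \<Longrightarrow> 0 \<le> w s"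
    and CB0: "0 \<le> CB"
    and Vd: "\<And>s y. s \<in> {0..t1} \<Longrightarrow> norm (V1 s y - V2 s y) \<le> CB * w s"
    and DVd: "\<And>s y. s \<in> {0..t1} \<Longrightarrow> norm (Dsp (V1 s) y - Dsp (V2 s) y) \<le> CB * w s"
begin

definition "II t = integral {0..t} w"

lemma wi: "t \<in> {0..t1} \<Longrightarrow> w integrable_on {0..t}"
  by (rule integrable_continuous_real[OF continuous_on_subset[OF wc]]) auto

lemma II_nonneg: "t \<in> {0..t1} \<Longrightarrow> 0 \<le> II t"
  unfolding II_def by (rule integral_nonneg[OF wi]) (use w0 in auto)

lemma II_mono: "t \<in> {0..t1} \<Longrightarrow> s \<in> {0..t} \<Longrightarrow> II s \<le> II t"
  unfolding II_def by (rule integral_subset_le) (use wi w0 in auto)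

lemma flow_diff:
  assumes t: "t \<in> {0..t1}"
  shows "norm (\<phi>1 t x - \<phi>2 t x) \<le> CB * f1.EE * II t"
proof -
  have "norm (\<phi>1 t x - \<phi>2 t x) \<le> (norm (\<phi>1 0 x - \<phi>2 0 x) + integral {0..t} (\<lambda>s. CB * w s)) * exp (M * t)"
  proof (rule ode_gronwall[where f="\<lambda>s. \<phi>1 s x - \<phi>2 s x" and f'="\<lambda>s. V1 s (\<phi>1 s x) - V2 s (\<phi>2 s x)"])
    show "0 \<le> t" using t by simp
    fix s assume s: "s \<in> {0..t}"
    note s1 = f1.sub01[OF t s]
    show "((\<lambda>s. \<phi>1 s x - \<phi>2 s x) has_vector_derivative V1 s (\<phi>1 s x) - V2 s (\<phi>2 s x)) (at s within {0..t})"
      by (intro has_vector_derivative_diff f1.odeD[OF t s] f2.odeD[OF t s])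
    have "norm (V1 s (\<phi>1 s x) - V2 s (\<phi>2 s x)) \<le> norm (V1 s (\<phi>1 s x) - V2 s (\<phi>1 s x)) + norm (V2 s (\<phi>1 s x) - V2 s (\<phi>2 s x))"
      using norm_triangle_ineq[of "V1 s (\<phi>1 s x) - V2 s (\<phi>1 s x)" "V2 s (\<phi>1 s x) - V2 s (\<phi>2 s x)"] by simp
    also have "\<dots> \<le> CB * w s + M * norm (\<phi>1 s x - \<phi>2 s x)"
      using Vd[OF s1] f2.V_lip[OF s1] by (intro add_mono) auto
    finally show "norm (V1 s (\<phi>1 s x) - V2 s (\<phi>2 s x)) \<le> M * norm (\<phi>1 s x - \<phi>2 s x) + CB * w s" by simp
    show "0 \<le> CB * w s" using CB0 w0[OF s1] by simp
  qed (use f1.M0 t in \<open>auto intro!: continuous_intros continuous_on_subset[OF wc]\<close>)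
  also have "\<dots> = CB * II t * exp (M * t)" unfolding II_def by (simp add: f1.phi0 f2.phi0)
  also have "\<dots> \<le> CB * II t * f1.EE"
    by (rule mult_left_mono[OF f1.exp_le_EE[OF t]]) (use CB0 II_nonneg[OF t] in simp)
  finally show ?thesis by (simp add: mult_ac)
qed

definition "K6 = CB * f1.EE ^ 2 * (1 + T0 * M * f1.EE)"

lemma K6_nonneg: "0 \<le> K6" unfolding K6_def using CB0 f1.t1 f1.M0 f1.EE_pos by simp

lemma Dl_diff:
  assumes t: "t \<in> {0..t1}"
  shows "norm (f1.Dl t x v - f2.Dl t x v) \<le> K6 * II t * norm v"
proof -
  define E where "E = f1.EE"
  have E0: "0 < E" unfolding E_def by (rule f1.EE_pos)
  define c where "c = M * (CB * E * II t) * (E * norm v)"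
  have c0: "0 \<le> c" unfolding c_def using f1.M0 CB0 E0 II_nonneg[OF t] by simp
  define f where "f s = f1.Dl s x v - f2.Dl s x v" for s
  define f' where "f' s = (V1 s (\<phi>1 s (x + v)) - V1 s (\<phi>1 s x)) - (V2 s (\<phi>2 s (x + v)) - V2 s (\<phi>2 s x))" for s
  have "norm (f t) \<le> (norm (f 0) + integral {0..t} (\<lambda>s. (CB * E * norm v) * w s + c)) * exp (M * t)"
  proof (rule ode_gronwall[where f'=f'])
    show "0 \<le> t" using t by simp
    fix s assume s: "s \<in> {0..t}"
    note s1 = f1.sub01[OF t s]
    show "(f has_vector_derivative f' s) (at s within {0..t})"
      unfolding f_def f'_def f1.Dl_def f2.Dl_def
      by (intro has_vector_derivative_diff f1.odeD[OF t s] f2.odeD[OF t s])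
    define q where "q = \<phi>1 s x"
    define p where "p = \<phi>2 s x"
    define a where "a = f1.Dl s x v"
    define b where "b = f2.Dl s x v"
    have e: "f' s = ((V1 s (q + a) - V2 s (q + a)) - (V1 s q - V2 s q)) + (V2 s (q + a) - V2 s q - V2 s (p + a) + V2 s p)
        + (V2 s (p + a) - V2 s (p + b))"
      unfolding f'_def q_def p_def a_def b_def f1.Dl_def f2.Dl_def by (simp add: algebra_simps)
    have na: "norm a \<le> E * norm v" unfolding a_def E_def by (rule f1.Dl_bound[OF s1])
    have 1: "norm ((V1 s (q + a) - V2 s (q + a)) - (V1 s q - V2 s q)) \<le> (CB * w s) * norm a"
      by (rule fb_diff[OF f1.cbV[OF s1] f2.cbV[OF s1] DVd[OF s1]])
    also have "\<dots> \<le> (CB * E * norm v) * w s"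
    proof -
      have "norm a * w s \<le> (E * norm v) * w s" by (rule mult_right_mono[OF na w0[OF s1]])
      then show ?thesis using CB0 by (simp add: mult_left_mono mult_ac)
    qed
    finally have 1: "norm ((V1 s (q + a) - V2 s (q + a)) - (V1 s q - V2 s q)) \<le> (CB * E * norm v) * w s" .
    have 2: "norm (V2 s (q + a) - V2 s q - V2 s (p + a) + V2 s p) \<le> M * norm (q - p) * norm a"
      by (rule fb_sd[OF f2.cbV[OF s1] f2.cbM[OF s1]])
    also have "\<dots> \<le> c"
    proof -
      have "norm (q - p) \<le> CB * E * II s" unfolding q_def p_def E_def by (rule flow_diff[OF s1])
      also have "\<dots> \<le> CB * E * II t" using II_mono[OF t s] CB0 E0 by (simp add: mult_left_mono)
      finally have "norm (q - p) * norm a \<le> (CB * E * II t) * (E * norm v)"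
        using na CB0 E0 II_nonneg[OF t] by (intro mult_mono) auto
      then show ?thesis unfolding c_def using f1.M0 by (simp add: mult.assoc mult_left_mono)
    qed
    finally have 2: "norm (V2 s (q + a) - V2 s q - V2 s (p + a) + V2 s p) \<le> c" .
    have 3: "norm (V2 s (p + a) - V2 s (p + b)) \<le> M * norm (f s)"
      using f2.V_lip[OF s1, of "p + a" "p + b"] unfolding f_def a_def b_def by simp
    have "norm (f' s) \<le> norm ((V1 s (q + a) - V2 s (q + a)) - (V1 s q - V2 s q)) + norm (V2 s (q + a) - V2 s q - V2 s (p + a) + V2 s p)
        + norm (V2 s (p + a) - V2 s (p + b))"
      unfolding e by (rule order_trans[OF norm_triangle_ineq add_right_mono[OF norm_triangle_ineq]])
    then show "norm (f' s) \<le> M * norm (f s) + ((CB * E * norm v) * w s + c)" using 1 2 3 by linarith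
    show "0 \<le> (CB * E * norm v) * w s + c" using CB0 E0 w0[OF s1] c0 by simp
  qed (use f1.M0 t in \<open>auto intro!: continuous_intros continuous_on_subset[OF wc]\<close>)
  also have "f 0 = 0" unfolding f_def f1.Dl_def f2.Dl_def by (simp add: f1.phi0 f2.phi0)
  also have "integral {0..t} (\<lambda>s. (CB * E * norm v) * w s + c) = (CB * E * norm v) * II t + t * c"
  proof -
    have i1: "(\<lambda>s. (CB * E * norm v) * w s) integrable_on {0..t}"
      by (rule integrable_continuous_real) (use t in \<open>auto intro!: continuous_intros continuous_on_subset[OF wc]\<close>)
    have "integral {0..t} (\<lambda>s. (CB * E * norm v) * w s + c) = integral {0..t} (\<lambda>s. (CB * E * norm v) * w s) + integral {0..t} (\<lambda>s. c)"
      by (rule integral_add[OF i1]) (rule integrable_const_ivl)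
    also have "integral {0..t} (\<lambda>s. (CB * E * norm v) * w s) = (CB * E * norm v) * II t"
      unfolding II_def by (rule integral_mult_right)
    also have "integral {0..t} (\<lambda>s. c) = t * c" using t by simp
    finally show ?thesis .
  qed
  also have "(norm 0 + ((CB * E * norm v) * II t + t * c)) * exp (M * t) \<le> ((CB * E * norm v) * II t + T0 * c) * E"
  proof -
    have "(CB * E * norm v) * II t + t * c \<le> (CB * E * norm v) * II t + T0 * c"
      using t f1.t1 c0 by (simp add: mult_right_mono)
    moreover have "0 \<le> (CB * E * norm v) * II t + t * c" using CB0 E0 II_nonneg[OF t] c0 t by simp
    ultimately show ?thesis using f1.exp_le_EE[OF t] unfolding E_def by (simp add: mult_mono)
  qed
  also have "\<dots> = K6 * II t * norm v" unfolding K6_def c_def E_def by (simp add: power2_eq_square algebra_simps)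
  finally show ?thesis unfolding f_def .
qed

lemma Dphi_diff:
  assumes t: "t \<in> {0..t1}"
  shows "norm (f1.Dphi t x v - f2.Dphi t x v) \<le> K6 * II t * norm v"
  using lin_compare[where \<Delta>="f1.Dl t x" and \<Delta>'="f2.Dl t x" and K="3 * f1.Kdef" and A="f1.Dphi t x" and A'="f2.Dphi t x"
      and c="K6 * II t"]
    f1.Dphi_props[OF t] f2.Dphi_props[OF t] Dl_diff[OF t] f1.Kdef_nonneg by (simp add: mult.assoc)

end

lemma transpose_matrix_row: "transpose (matrix f) $ k = f (axis k 1)"
  by (simp add: vec_eq_iff transpose_def matrix_def)

lemma tm_mult: "transpose (matrix f) *v u = (\<chi> k. inner (f (axis k 1)) u)"
  unfolding vec_eq_iff matrix_vector_mul_component transpose_matrix_row by simp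

lemma norm_chi_le:
  fixes c :: "'d::finite \<Rightarrow> real"
  assumes "\<And>k. \<bar>c k\<bar> \<le> b"
  shows "norm (\<chi> k. c k) \<le> real CARD('d) * b"
proof -
  have "norm (\<chi> k. c k) \<le> (\<Sum>k\<in>UNIV. \<bar>(\<chi> k. c k) $ k\<bar>)" by (rule norm_le_l1_cart)
  also have "\<dots> \<le> (\<Sum>k\<in>(UNIV::'d set). b)" by (rule sum_mono) (simp add: assms)
  also have "\<dots> = real CARD('d) * b" by simp
  finally show ?thesis .
qed

lemma chi_diff: "(\<chi> k. f k) - (\<chi> k. g k) = (\<chi> k. (f k - g k :: real))"
  by (simp add: vec_eq_iff)

lemma bc_apply: "f \<in> bcontfun \<Longrightarrow> apply_bcontfun (Bcontfun f) = f"
  by (simp add: Bcontfun_inverse)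

context flow_ctx
begin

lemma pf_eq: "t \<in> {0..t1} \<Longrightarrow> pf_field (\<phi> t) \<theta> = (\<lambda>x. \<chi> k. inner (Dphi t x (axis k 1)) (\<theta> (\<phi> t x)))"
  by (rule ext) (simp only: pf_field_def Dphi_def tm_mult)

definition "CD = real CARD('d)"

lemma CD_pos: "0 < CD" unfolding CD_def by simp

lemma phi_cont: "t \<in> {0..t1} \<Longrightarrow> continuous_on UNIV (\<phi> t)"
  by (rule lipschitz_on_continuous_on[where L=EE])
     (rule lipschitz_onI, use flow_lip EE_pos in \<open>auto simp: dist_norm\<close>)

lemma Klip_nonneg: "0 \<le> Klip" unfolding Klip_def using t1 M0 EE_pos by simp

lemma Dphi_cont: "t \<in> {0..t1} \<Longrightarrow> continuous_on UNIV (\<lambda>x. Dphi t x v)"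
proof (rule lipschitz_on_continuous_on[where L="Klip * norm v"], rule lipschitz_onI)
  fix x y assume "t \<in> {0..t1}"
  then show "dist (Dphi t x v) (Dphi t y v) \<le> Klip * norm v * dist x y"
    using Dphi_lip[of t x v y] by (simp add: dist_norm mult_ac)
qed (use Klip_nonneg in simp)

lemma pf_bcont:
  assumes t: "t \<in> {0..t1}"
  shows "pf_field (\<phi> t) \<theta> \<in> bcontfun" "\<And>x. norm (pf_field (\<phi> t) \<theta> x) \<le> CD * EE * norm \<theta>"
proof -
  show b: "norm (pf_field (\<phi> t) \<theta> x) \<le> CD * EE * norm \<theta>" for x
    unfolding pf_eq[OF t] CD_def mult.assoc
  proof (rule norm_chi_le)
    fix k
    have "\<bar>inner (Dphi t x (axis k 1)) (\<theta> (\<phi> t x))\<bar> \<le> norm (Dphi t x (axis k 1)) * norm (\<theta> (\<phi> t x))"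
      by (rule Cauchy_Schwarz_ineq2)
    also have "\<dots> \<le> EE * norm \<theta>"
      using Dphi_bound[OF t, of x "axis k 1"] norm_bounded[of \<theta> "\<phi> t x"] EE_pos
      by (intro mult_mono) auto
    finally show "\<bar>inner (Dphi t x (axis k 1)) (\<theta> (\<phi> t x))\<bar> \<le> EE * norm \<theta>" .
  qed
  show "pf_field (\<phi> t) \<theta> \<in> bcontfun"
  proof (rule bcontfun_normI[OF _ b])
    have c\<theta>: "continuous_on UNIV (\<lambda>x. \<theta> (\<phi> t x))"
      by (rule continuous_on_compose2[OF continuous_on_apply_bcontfun phi_cont[OF t]]) auto
    show "continuous_on UNIV (pf_field (\<phi> t) \<theta>)"
      unfolding pf_eq[OF t]
      by (intro continuous_on_vec_lambda continuous_on_inner Dphi_cont[OF t] c\<theta>)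
  qed
qed

lemma pf_lip:
  assumes t: "t \<in> {0..t1}" and L: "L-lipschitz_on UNIV (apply_bcontfun \<theta>)"
  shows "(CD * (Klip * norm \<theta> + EE ^ 2 * L))-lipschitz_on UNIV (pf_field (\<phi> t) \<theta>)"
proof (rule lipschitz_onI)
  have L0: "0 \<le> L" using L lipschitz_on_nonneg by auto
  have K0: "0 \<le> Klip" unfolding Klip_def using t1 M0 EE_pos by simp
  show "0 \<le> CD * (Klip * norm \<theta> + EE ^ 2 * L)" using CD_pos K0 L0 by simp
  fix x y
  have "norm (pf_field (\<phi> t) \<theta> x - pf_field (\<phi> t) \<theta> y) \<le> CD * ((Klip * norm \<theta> + EE ^ 2 * L) * dist x y)"
    unfolding pf_eq[OF t] CD_def chi_diff
  proof (rule norm_chi_le)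
    fix k
    define a where "a = Dphi t x (axis k 1)"
    define b where "b = Dphi t y (axis k 1)"
    have "inner a (\<theta> (\<phi> t x)) - inner b (\<theta> (\<phi> t y)) = inner (a - b) (\<theta> (\<phi> t x)) + inner b (\<theta> (\<phi> t x) - \<theta> (\<phi> t y))"
      by (simp add: inner_diff_left inner_diff_right)
    then have "\<bar>inner a (\<theta> (\<phi> t x)) - inner b (\<theta> (\<phi> t y))\<bar> \<le> norm (a - b) * norm (\<theta> (\<phi> t x)) + norm b * norm (\<theta> (\<phi> t x) - \<theta> (\<phi> t y))"
    proof -
      have "\<bar>inner (a - b) (\<theta> (\<phi> t x)) + inner b (\<theta> (\<phi> t x) - \<theta> (\<phi> t y))\<bar>
          \<le> \<bar>inner (a - b) (\<theta> (\<phi> t x))\<bar> + \<bar>inner b (\<theta> (\<phi> t x) - \<theta> (\<phi> t y))\<bar>" by (rule abs_triangle_ineq)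
      also have "\<dots> \<le> norm (a - b) * norm (\<theta> (\<phi> t x)) + norm b * norm (\<theta> (\<phi> t x) - \<theta> (\<phi> t y))"
        by (intro add_mono Cauchy_Schwarz_ineq2)
      finally show ?thesis using \<open>inner a _ - inner b _ = _\<close> by simp
    qed
    also have "\<dots> \<le> (Klip * dist x y) * norm \<theta> + EE * (L * (EE * dist x y))"
    proof (intro add_mono mult_mono)
      show "norm (a - b) \<le> Klip * dist x y" unfolding a_def b_def using Dphi_lip[OF t, of x "axis k 1" y] by (simp add: dist_norm)
      show "norm (\<theta> (\<phi> t x)) \<le> norm \<theta>" by (rule norm_bounded)
      show "norm b \<le> EE" unfolding b_def using Dphi_bound[OF t, of y "axis k 1"] by simp
      have "norm (\<theta> (\<phi> t x) - \<theta> (\<phi> t y)) \<le> L * norm (\<phi> t x - \<phi> t y)"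
        using lipschitz_onD[OF L, of "\<phi> t x" "\<phi> t y"] by (simp add: dist_norm)
      also have "\<dots> \<le> L * (EE * dist x y)" using flow_lip[OF t, of x y] L0 by (simp add: dist_norm mult_left_mono)
      finally show "norm (\<theta> (\<phi> t x) - \<theta> (\<phi> t y)) \<le> L * (EE * dist x y)" .
    qed (use K0 EE_pos L0 in auto)
    also have "\<dots> = (Klip * norm \<theta> + EE ^ 2 * L) * dist x y" by (simp add: power2_eq_square algebra_simps)
    finally show "\<bar>inner (Dphi t x (axis k 1)) (\<theta> (\<phi> t x)) - inner (Dphi t y (axis k 1)) (\<theta> (\<phi> t y))\<bar>
        \<le> (Klip * norm \<theta> + EE ^ 2 * L) * dist x y" unfolding a_def b_def by simp
  qed
  then show "dist (pf_field (\<phi> t) \<theta> x) (pf_field (\<phi> t) \<theta> y) \<le> CD * (Klip * norm \<theta> + EE ^ 2 * L) * dist x y"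
    by (simp add: dist_norm mult.assoc)
qed

lemma pf_add: "t \<in> {0..t1} \<Longrightarrow> pf_field (\<phi> t) (\<theta>1 + \<theta>2) = (\<lambda>x. pf_field (\<phi> t) \<theta>1 x + pf_field (\<phi> t) \<theta>2 x)"
  unfolding pf_eq by (rule ext) (simp add: vec_eq_iff inner_add_right)

lemma pf_scale: "t \<in> {0..t1} \<Longrightarrow> pf_field (\<phi> t) (r *\<^sub>R \<theta>) = (\<lambda>x. r *\<^sub>R pf_field (\<phi> t) \<theta> x)"
  unfolding pf_eq by (rule ext) (simp add: vec_eq_iff inner_scaleR_right)

lemma pf_meas_apply:
  assumes t: "t \<in> {0..t1}"
  shows "blinfun_apply (pf_meas (\<phi> t) \<xi>) \<theta> = blinfun_apply \<xi> (Bcontfun (pf_field (\<phi> t) \<theta>))"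
proof -
  have bl: "bounded_linear (\<lambda>\<theta>. blinfun_apply \<xi> (Bcontfun (pf_field (\<phi> t) \<theta>)))"
  proof (rule bounded_linear_intro)
    fix \<theta>1 \<theta>2 :: "'d field"
    have "Bcontfun (pf_field (\<phi> t) (\<theta>1 + \<theta>2)) = Bcontfun (pf_field (\<phi> t) \<theta>1) + Bcontfun (pf_field (\<phi> t) \<theta>2)"
      by (rule bcontfun_eqI) (simp add: bc_apply pf_bcont[OF t] plus_cont pf_add[OF t])
    then show "blinfun_apply \<xi> (Bcontfun (pf_field (\<phi> t) (\<theta>1 + \<theta>2))) =
        blinfun_apply \<xi> (Bcontfun (pf_field (\<phi> t) \<theta>1)) + blinfun_apply \<xi> (Bcontfun (pf_field (\<phi> t) \<theta>2))"
      by (simp add: blinfun.add_right)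
  next
    fix r and \<theta> :: "'d field"
    have "Bcontfun (pf_field (\<phi> t) (r *\<^sub>R \<theta>)) = r *\<^sub>R Bcontfun (pf_field (\<phi> t) \<theta>)"
      by (rule bcontfun_eqI) (simp add: bc_apply pf_bcont[OF t] scaleR_cont pf_scale[OF t])
    then show "blinfun_apply \<xi> (Bcontfun (pf_field (\<phi> t) (r *\<^sub>R \<theta>))) = r *\<^sub>R blinfun_apply \<xi> (Bcontfun (pf_field (\<phi> t) \<theta>))"
      by (simp add: blinfun.scaleR_right)
  next
    fix \<theta> :: "'d field"
    have "norm (Bcontfun (pf_field (\<phi> t) \<theta>)) \<le> CD * EE * norm \<theta>"
      by (rule norm_bound) (simp add: bc_apply pf_bcont[OF t])
    then have "norm (blinfun_apply \<xi> (Bcontfun (pf_field (\<phi> t) \<theta>))) \<le> norm \<xi> * (CD * EE * norm \<theta>)"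
      by (rule order_trans[OF norm_blinfun mult_left_mono]) simp
    then show "norm (blinfun_apply \<xi> (Bcontfun (pf_field (\<phi> t) \<theta>))) \<le> norm \<theta> * (norm \<xi> * CD * EE)"
      by (simp add: mult_ac)
  qed
  show ?thesis unfolding pf_meas_def by (simp add: bounded_linear_Blinfun_apply[OF bl])
qed

end

lemma norm_chi_le':
  fixes c :: "'d::finite \<Rightarrow> real"
  assumes "\<And>k. \<bar>c k\<bar> \<le> b" "r = real CARD('d) * b"
  shows "norm (\<chi> k. c k) \<le> r"
  using norm_chi_le[of c b] assms by simp

context flow_pair
begin

lemma pf_diff_bound:
  assumes t: "t \<in> {0..t1}" and L: "L-lipschitz_on UNIV (apply_bcontfun \<theta>)"
  shows "norm (Bcontfun (pf_field (\<phi>1 t) \<theta>) - Bcontfun (pf_field (\<phi>2 t) \<theta>))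
     \<le> f1.CD * (K6 * norm \<theta> + f1.EE * L * (CB * f1.EE)) * II t"
proof (rule norm_bound)
  have L0: "0 \<le> L" using L lipschitz_on_nonneg by auto
  fix x
  have "apply_bcontfun (Bcontfun (pf_field (\<phi>1 t) \<theta>) - Bcontfun (pf_field (\<phi>2 t) \<theta>)) x = pf_field (\<phi>1 t) \<theta> x - pf_field (\<phi>2 t) \<theta> x"
    by (simp add: bc_apply f1.pf_bcont[OF t] f2.pf_bcont[OF t])
  also have "\<dots> = (\<chi> k. inner (f1.Dphi t x (axis k 1)) (\<theta> (\<phi>1 t x)) - inner (f2.Dphi t x (axis k 1)) (\<theta> (\<phi>2 t x)))"
    unfolding f1.pf_eq[OF t] f2.pf_eq[OF t] chi_diff ..
  finally have eq: "apply_bcontfun (Bcontfun (pf_field (\<phi>1 t) \<theta>) - Bcontfun (pf_field (\<phi>2 t) \<theta>)) x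
     = (\<chi> k. inner (f1.Dphi t x (axis k 1)) (\<theta> (\<phi>1 t x)) - inner (f2.Dphi t x (axis k 1)) (\<theta> (\<phi>2 t x)))" .
  show "norm (apply_bcontfun (Bcontfun (pf_field (\<phi>1 t) \<theta>) - Bcontfun (pf_field (\<phi>2 t) \<theta>)) x)
     \<le> f1.CD * (K6 * norm \<theta> + f1.EE * L * (CB * f1.EE)) * II t"
    unfolding eq f1.CD_def
  proof (rule norm_chi_le'[where b="(K6 * norm \<theta> + f1.EE * L * (CB * f1.EE)) * II t"])
    show "real CARD('d) * (K6 * norm \<theta> + f1.EE * L * (CB * f1.EE)) * II t = real CARD('d) * ((K6 * norm \<theta> + f1.EE * L * (CB * f1.EE)) * II t)"
      by simp
  next
    fix k
    define a where "a = f1.Dphi t x (axis k 1)"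
    define b where "b = f2.Dphi t x (axis k 1)"
    have "inner a (\<theta> (\<phi>1 t x)) - inner b (\<theta> (\<phi>2 t x)) = inner (a - b) (\<theta> (\<phi>1 t x)) + inner b (\<theta> (\<phi>1 t x) - \<theta> (\<phi>2 t x))"
      by (simp add: inner_diff_left inner_diff_right)
    then have "\<bar>inner a (\<theta> (\<phi>1 t x)) - inner b (\<theta> (\<phi>2 t x))\<bar> \<le> norm (a - b) * norm (\<theta> (\<phi>1 t x)) + norm b * norm (\<theta> (\<phi>1 t x) - \<theta> (\<phi>2 t x))"
    proof -
      have "\<bar>inner (a - b) (\<theta> (\<phi>1 t x)) + inner b (\<theta> (\<phi>1 t x) - \<theta> (\<phi>2 t x))\<bar>
          \<le> \<bar>inner (a - b) (\<theta> (\<phi>1 t x))\<bar> + \<bar>inner b (\<theta> (\<phi>1 t x) - \<theta> (\<phi>2 t x))\<bar>" by (rule abs_triangle_ineq)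
      also have "\<dots> \<le> norm (a - b) * norm (\<theta> (\<phi>1 t x)) + norm b * norm (\<theta> (\<phi>1 t x) - \<theta> (\<phi>2 t x))"
        by (intro add_mono Cauchy_Schwarz_ineq2)
      finally show ?thesis using \<open>inner a _ - inner b _ = _\<close> by simp
    qed
    also have "\<dots> \<le> (K6 * II t) * norm \<theta> + f1.EE * (L * (CB * f1.EE * II t))"
    proof (intro add_mono mult_mono)
      show "norm (a - b) \<le> K6 * II t" unfolding a_def b_def using Dphi_diff[OF t, of x "axis k 1"] by simp
      show "norm (\<theta> (\<phi>1 t x)) \<le> norm \<theta>" by (rule norm_bounded)
      show "norm b \<le> f1.EE" unfolding b_def using f2.Dphi_bound[OF t, of x "axis k 1"] by simp
      have "norm (\<theta> (\<phi>1 t x) - \<theta> (\<phi>2 t x)) \<le> L * norm (\<phi>1 t x - \<phi>2 t x)"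
        using lipschitz_onD[OF L, of "\<phi>1 t x" "\<phi>2 t x"] by (simp add: dist_norm)
      also have "\<dots> \<le> L * (CB * f1.EE * II t)" using flow_diff[OF t, of x] L0 by (simp add: mult_left_mono)
      finally show "norm (\<theta> (\<phi>1 t x) - \<theta> (\<phi>2 t x)) \<le> L * (CB * f1.EE * II t)" .
    qed (use K6_nonneg II_nonneg[OF t] f1.EE_pos L0 CB0 in auto)
    also have "\<dots> = (K6 * norm \<theta> + f1.EE * L * (CB * f1.EE)) * II t" by (simp add: algebra_simps)
    finally show "\<bar>inner (f1.Dphi t x (axis k 1)) (\<theta> (\<phi>1 t x)) - inner (f2.Dphi t x (axis k 1)) (\<theta> (\<phi>2 t x))\<bar>
        \<le> (K6 * norm \<theta> + f1.EE * L * (CB * f1.EE)) * II t" by (simp only: a_def b_def)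
  qed
qed

definition "C1 = f1.CD * (f1.EE + f1.Klip + f1.EE ^ 2)"
definition "C2 \<xi>b = norm \<xi>b * f1.CD * (K6 + CB * f1.EE ^ 2)"

lemma C1_nonneg: "0 \<le> C1" unfolding C1_def using f1.CD_pos f1.EE_pos f1.Klip_nonneg by simp
lemma C2_nonneg: "0 \<le> C2 \<xi>b" unfolding C2_def using f1.CD_pos f1.EE_pos K6_nonneg CB0 by simp

lemma main_est:
  assumes t: "t \<in> {0..t1}"
  shows "wnorm (pf_meas (\<phi>1 t) \<xi>a - pf_meas (\<phi>2 t) \<xi>b) \<le> C1 * wnorm (\<xi>a - \<xi>b) + C2 \<xi>b * II t"
proof (rule wnorm_le)
  fix \<theta> :: "'d field" and L assume L: "L-lipschitz_on UNIV (apply_bcontfun \<theta>)" and n: "norm \<theta> + L \<le> 1"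
  have L0: "0 \<le> L" using L lipschitz_on_nonneg by auto
  have n1: "norm \<theta> \<le> 1" "L \<le> 1" using n L0 norm_ge_zero[of \<theta>] by linarith+
  define B1 where "B1 = Bcontfun (pf_field (\<phi>1 t) \<theta>)"
  define B2 where "B2 = Bcontfun (pf_field (\<phi>2 t) \<theta>)"
  have "blinfun_apply (pf_meas (\<phi>1 t) \<xi>a - pf_meas (\<phi>2 t) \<xi>b) \<theta> = blinfun_apply (\<xi>a - \<xi>b) B1 + blinfun_apply \<xi>b (B1 - B2)"
    unfolding B1_def B2_def
    by (simp add: f1.pf_meas_apply[OF t] f2.pf_meas_apply[OF t] blinfun.diff_left blinfun.diff_right)
  also have "blinfun_apply (\<xi>a - \<xi>b) B1 \<le> wnorm (\<xi>a - \<xi>b) * (f1.CD * f1.EE * norm \<theta> + f1.CD * (f1.Klip * norm \<theta> + f1.EE ^ 2 * L))"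
  proof (rule wnorm_ge)
    show "(f1.CD * (f1.Klip * norm \<theta> + f1.EE ^ 2 * L))-lipschitz_on UNIV (apply_bcontfun B1)"
      unfolding B1_def using f1.pf_lip[OF t L] by (simp add: bc_apply f1.pf_bcont[OF t])
    show "norm B1 \<le> f1.CD * f1.EE * norm \<theta>"
      unfolding B1_def by (rule norm_bound) (simp add: bc_apply f1.pf_bcont[OF t])
  qed
  also have "\<dots> \<le> wnorm (\<xi>a - \<xi>b) * C1"
  proof (rule mult_left_mono[OF _ wnorm_nonneg])
    have "f1.CD * f1.EE * norm \<theta> \<le> f1.CD * f1.EE" using n1 f1.CD_pos f1.EE_pos by (simp add: mult_left_le)
    moreover have "f1.Klip * norm \<theta> \<le> f1.Klip" using n1 f1.Klip_nonneg by (simp add: mult_left_le)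
    moreover have "f1.EE ^ 2 * L \<le> f1.EE ^ 2" using n1 by (simp add: mult_left_le)
    ultimately show "f1.CD * f1.EE * norm \<theta> + f1.CD * (f1.Klip * norm \<theta> + f1.EE ^ 2 * L) \<le> C1"
      unfolding C1_def using f1.CD_pos by (simp add: algebra_simps add_mono mult_left_mono)
  qed
  also have "blinfun_apply \<xi>b (B1 - B2) \<le> norm \<xi>b * norm (B1 - B2)"
    using norm_blinfun[of \<xi>b "B1 - B2"] by simp
  also have "\<dots> \<le> norm \<xi>b * (f1.CD * (K6 * norm \<theta> + f1.EE * L * (CB * f1.EE)) * II t)"
    unfolding B1_def B2_def by (rule mult_left_mono[OF pf_diff_bound[OF t L]]) simp
  also have "\<dots> \<le> C2 \<xi>b * II t"
  proof -
    have "K6 * norm \<theta> + f1.EE * L * (CB * f1.EE) \<le> K6 + CB * f1.EE ^ 2"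
    proof -
      have "K6 * norm \<theta> \<le> K6" using n1 K6_nonneg by (simp add: mult_left_le)
      moreover have "f1.EE * L * (CB * f1.EE) \<le> CB * f1.EE ^ 2"
      proof -
        have "L * (f1.EE * f1.EE) \<le> f1.EE * f1.EE" using n1 f1.EE_pos by (simp add: mult_left_le_one_le)
        then show ?thesis using CB0 by (simp add: power2_eq_square mult_left_mono mult_ac)
      qed
      ultimately show ?thesis by simp
    qed
    then show ?thesis unfolding C2_def using II_nonneg[OF t] f1.CD_pos
      by (simp add: mult.assoc mult_left_mono mult_right_mono)
  qed
  finally show "blinfun_apply (pf_meas (\<phi>1 t) \<xi>a - pf_meas (\<phi>2 t) \<xi>b) \<theta> \<le> C1 * wnorm (\<xi>a - \<xi>b) + C2 \<xi>b * II t"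
    by (simp add: mult.commute)
qed

end

lemma wnorm_zero: "wnorm (0::'d::finite meas) = 0"
proof -
  have "wnorm (0::'d meas) \<le> 0" by (rule wnorm_le) simp
  then show ?thesis using wnorm_nonneg[of "0::'d meas"] by simp
qed

lemma wnorm_diff_abs: "\<bar>wnorm x - wnorm y\<bar> \<le> wnorm (x - y::'d::finite meas)"
proof -
  have "wnorm x \<le> wnorm (x - y) + wnorm y" using wnorm_triangle[of "x - y" y] by simp
  moreover have "wnorm y \<le> wnorm (y - x) + wnorm x" using wnorm_triangle[of "y - x" x] by simp
  ultimately show ?thesis using wnorm_commute[of x y] by linarith
qed

lemma wcont_diff:
  fixes a b :: "real \<Rightarrow> 'd::finite meas"
  assumes "wcont_on T a" "wcont_on T b" "S \<subseteq> {0..T}"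
  shows "continuous_on S (\<lambda>s. wnorm (a s - b s))"
proof -
  have "continuous_on {0..T} (\<lambda>s. wnorm (a s - b s))"
    unfolding continuous_on_iff
  proof (intro ballI allI impI)
    fix t e assume t: "t \<in> {0..T}" and e: "(0::real) < e"
    obtain d1 where d1: "d1 > 0" "\<And>s. s \<in> {0..T} \<Longrightarrow> \<bar>s - t\<bar> < d1 \<Longrightarrow> wnorm (a s - a t) < e/2"
      using assms(1) t e unfolding wcont_on_def by (meson half_gt_zero)
    obtain d2 where d2: "d2 > 0" "\<And>s. s \<in> {0..T} \<Longrightarrow> \<bar>s - t\<bar> < d2 \<Longrightarrow> wnorm (b s - b t) < e/2"
      using assms(2) t e unfolding wcont_on_def by (meson half_gt_zero)
    show "\<exists>d>0. \<forall>s\<in>{0..T}. dist s t < d \<longrightarrow> dist (wnorm (a s - b s)) (wnorm (a t - b t)) < e"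
    proof (intro exI[of _ "min d1 d2"] conjI ballI impI)
      show "0 < min d1 d2" using d1 d2 by simp
      fix s assume s: "s \<in> {0..T}" "dist s t < min d1 d2"
      have "\<bar>wnorm (a s - b s) - wnorm (a t - b t)\<bar> \<le> wnorm ((a s - b s) - (a t - b t))" by (rule wnorm_diff_abs)
      also have "(a s - b s) - (a t - b t) = (a s - a t) + (- (b s - b t))" by simp
      also have "wnorm \<dots> \<le> wnorm (a s - a t) + wnorm (- (b s - b t))" by (rule wnorm_triangle)
      also have "\<dots> < e/2 + e/2" unfolding wnorm_uminus
        using d1(2)[OF s(1)] d2(2)[OF s(1)] s(2) by (intro add_strict_mono) (auto simp: dist_real_def)
      finally show "dist (wnorm (a s - b s)) (wnorm (a t - b t)) < e" by (simp add: dist_real_def)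
    qed
  qed
  then show ?thesis by (rule continuous_on_subset[OF _ assms(3)])
qed

definition "Cst (d::real) CB T R nb = (let M = CB * (R + 1); E = exp (M * T) in
   d * (E + T * M * E ^ 3 + E ^ 2) * exp (nb * d * (CB * E ^ 2 * (1 + T * M * E) + CB * E ^ 2) * T))"

lemma Cst_nonneg: "CB \<ge> 0 \<Longrightarrow> R \<ge> 0 \<Longrightarrow> T \<ge> 0 \<Longrightarrow> d \<ge> 0 \<Longrightarrow> 0 \<le> Cst d CB T R nb"
  unfolding Cst_def Let_def by simp

lemma pair_estimate:
  fixes B :: "'d::finite meas \<Rightarrow> ('d R \<Rightarrow> 'd R)"
  assumes sa: "standing_assms B CB" and T: "T \<ge> 0"
    and sol1: "is_solution B T a0 a" and sol2: "is_solution B T b0 b"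
    and t1: "t1 \<in> {0..T}" and R: "R \<ge> 0"
    and Ra: "\<And>s. s \<in> {0..t1} \<Longrightarrow> wnorm (a s) \<le> R"
    and Rb: "\<And>s. s \<in> {0..t1} \<Longrightarrow> wnorm (b s) \<le> R"
    and t: "t \<in> {0..t1}"
  shows "wnorm (a t - b t) \<le> Cst (real CARD('d)) CB T R (norm b0) * wnorm (a0 - b0)"
proof -
  obtain \<phi>1 where f1: "is_flow B T a \<phi>1" and e1: "\<And>t. t \<in> {0..T} \<Longrightarrow> a t = pf_meas (\<phi>1 t) a0"
    and wa: "wcont_on T a" and a0: "a 0 = a0"
    using sol1 unfolding is_solution_def by blast
  obtain \<phi>2 where f2: "is_flow B T b \<phi>2" and e2: "\<And>t. t \<in> {0..T} \<Longrightarrow> b t = pf_meas (\<phi>2 t) b0"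
    and wb: "wcont_on T b" and b0: "b 0 = b0"
    using sol2 unfolding is_solution_def by blast
  have CB: "CB > 0" by (rule sa_CB[OF sa])
  have sub: "{0..t1} \<subseteq> {0..T}" using t1 by auto
  interpret P: flow_pair "\<lambda>s. B (a s)" \<phi>1 "\<lambda>s. B (b s)" \<phi>2 t1 T "CB * (R + 1)" "\<lambda>s. wnorm (a s - b s)" CB
  proof unfold_locales
    show "\<phi>1 0 x = x" for x using f1 unfolding is_flow_def by auto
    show "\<phi>2 0 x = x" for x using f2 unfolding is_flow_def by auto
    show "((\<lambda>s. \<phi>1 s x) has_vector_derivative B (a s) (\<phi>1 s x)) (at s within {0..t1})" if "s \<in> {0..t1}" for x s
    proof -
      have "s \<in> {0..T}" using that sub by auto
      then have "((\<lambda>s. \<phi>1 s x) has_vector_derivative B (a s) (\<phi>1 s x)) (at s within {0..T})"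
        using f1 unfolding is_flow_def by blast
      then show ?thesis by (rule has_vector_derivative_within_subset[OF _ sub])
    qed
    show "((\<lambda>s. \<phi>2 s x) has_vector_derivative B (b s) (\<phi>2 s x)) (at s within {0..t1})" if "s \<in> {0..t1}" for x s
    proof -
      have "s \<in> {0..T}" using that sub by auto
      then have "((\<lambda>s. \<phi>2 s x) has_vector_derivative B (b s) (\<phi>2 s x)) (at s within {0..T})"
        using f2 unfolding is_flow_def by blast
      then show ?thesis by (rule has_vector_derivative_within_subset[OF _ sub])
    qed
    show "Cb2 (B (a s))" "Cb2 (B (b s))" for s by (rule sa_Cb2[OF sa])+
    show "cb2norm (B (a s)) \<le> CB * (R + 1)" if "s \<in> {0..t1}" for s
      by (rule order_trans[OF sa_cb2norm[OF sa, of "a s"] mult_left_mono]) (use Ra[OF that] CB in auto)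
    show "cb2norm (B (b s)) \<le> CB * (R + 1)" if "s \<in> {0..t1}" for s
      by (rule order_trans[OF sa_cb2norm[OF sa, of "b s"] mult_left_mono]) (use Rb[OF that] CB in auto)
    show "0 \<le> t1" "t1 \<le> T" using t1 by auto
    show "0 \<le> CB * (R + 1)" using CB R by auto
    show "continuous_on {0..t1} (\<lambda>s. wnorm (a s - b s))" by (rule wcont_diff[OF wa wb sub])
    show "0 \<le> wnorm (a s - b s)" for s by (rule wnorm_nonneg)
    show "0 \<le> CB" using CB by simp
    show "norm (B (a s) y - B (b s) y) \<le> CB * wnorm (a s - b s)" for s y by (rule sa_sup[OF sa])
    show "norm (Dsp (B (a s)) y - Dsp (B (b s)) y) \<le> CB * wnorm (a s - b s)" for s y by (rule sa_supD[OF sa])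
  qed
  define \<delta> where "\<delta> = wnorm (a0 - b0)"
  have le: "wnorm (a s - b s) \<le> P.C1 * \<delta> + P.C2 b0 * integral {0..s} (\<lambda>s. wnorm (a s - b s))"
    if s: "s \<in> {0..t1}" for s
  proof -
    have "a s - b s = pf_meas (\<phi>1 s) a0 - pf_meas (\<phi>2 s) b0" using e1 e2 s sub by auto
    then show ?thesis using P.main_est[OF s, of a0 b0] unfolding \<delta>_def P.II_def by simp
  qed
  have "wnorm (a t - b t) \<le> P.C1 * \<delta> * exp (P.C2 b0 * t)"
    by (rule gronwall_int[OF wcont_diff[OF wa wb sub] P.C2_nonneg le t])
  also have "\<dots> \<le> P.C1 * \<delta> * exp (P.C2 b0 * T)"
    using t t1 P.C2_nonneg[of b0] P.C1_nonneg wnorm_nonneg[of "a0 - b0"] unfolding \<delta>_def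
    by (intro mult_left_mono) (auto intro: mult_left_mono)
  also have "P.C1 * \<delta> * exp (P.C2 b0 * T) = Cst (real CARD('d)) CB T R (norm b0) * \<delta>"
    unfolding P.C1_def P.C2_def P.K6_def P.f1.CD_def P.f1.EE_def P.f1.Klip_def Cst_def Let_def
    by (simp add: algebra_simps)
  finally show ?thesis unfolding \<delta>_def .
qed

lemma Cst_ge1:
  assumes "d \<ge> 1" "CB \<ge> 0" "R \<ge> 0" "T \<ge> 0" "nb \<ge> 0"
  shows "1 \<le> Cst d CB T R nb"
proof -
  define M where "M = CB * (R + 1)"
  define E where "E = exp (M * T)"
  have M0: "M \<ge> 0" unfolding M_def using assms by simp
  have E1: "E \<ge> 1" unfolding E_def using M0 assms by simp
  have Y: "1 \<le> E + T * M * E ^ 3 + E ^ 2" using E1 M0 assms by (simp add: add_increasing2)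
  define X where "X = nb * d * (CB * E ^ 2 * (1 + T * M * E) + CB * E ^ 2) * T"
  have X0: "0 \<le> X" unfolding X_def using assms M0 E1 by simp
  have Z: "1 \<le> exp X" using X0 by simp
  have dY: "1 \<le> d * (E + T * M * E ^ 3 + E ^ 2)" using mult_mono[OF assms(1) Y] assms(1) by simp
  have "1 \<le> d * (E + T * M * E ^ 3 + E ^ 2) * exp X" using mult_mono[OF dY Z] dY by simp
  then show ?thesis unfolding Cst_def Let_def M_def[symmetric] E_def[symmetric] X_def[symmetric] .
qed

lemma bootstrap:
  fixes B :: "'d::finite meas \<Rightarrow> ('d R \<Rightarrow> 'd R)"
  assumes sa: "standing_assms B CB" and T: "T \<ge> 0"
    and sol1: "is_solution B T a0 a" and sol2: "is_solution B T b0 b"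
    and R0: "R0 \<ge> 0" and Rb: "\<And>t. t \<in> {0..T} \<Longrightarrow> wnorm (b t) \<le> R0"
    and small: "Cst (real CARD('d)) CB T (R0 + 1) (norm b0) * wnorm (a0 - b0) < 1"
  shows "\<forall>t\<in>{0..T}. wnorm (a t - b t) \<le> Cst (real CARD('d)) CB T (R0 + 1) (norm b0) * wnorm (a0 - b0)"
proof -
  define Cb where "Cb = Cst (real CARD('d)) CB T (R0 + 1) (norm b0)"
  define w where "w t = wnorm (a t - b t)" for t
  have wa: "wcont_on T a" and a0: "a 0 = a0" using sol1 unfolding is_solution_def by auto
  have wb: "wcont_on T b" and b0: "b 0 = b0" using sol2 unfolding is_solution_def by auto
  have wc: "continuous_on {0..T} w" unfolding w_def by (rule wcont_diff[OF wa wb]) simp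
  have CB: "CB > 0" by (rule sa_CB[OF sa])
  have Cb1: "1 \<le> Cb" unfolding Cb_def by (rule Cst_ge1) (use CB R0 T in auto)
  have w0: "w 0 < 1"
  proof -
    have "w 0 = wnorm (a0 - b0)" unfolding w_def a0 b0 ..
    also have "\<dots> \<le> Cb * wnorm (a0 - b0)" using Cb1 wnorm_nonneg[of "a0 - b0"] by (simp add: mult_le_cancel_right1)
    also have "\<dots> < 1" using small unfolding Cb_def .
    finally show ?thesis .
  qed
  have PE: "w t \<le> Cb * wnorm (a0 - b0)"
    if t1: "t1 \<in> {0..T}" and bd: "\<And>s. s \<in> {0..t1} \<Longrightarrow> w s \<le> 1" and t: "t \<in> {0..t1}" for t1 t
    unfolding w_def Cb_def
  proof (rule pair_estimate[OF sa T sol1 sol2 t1 _ _ _ t])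
    show "0 \<le> R0 + 1" using R0 by simp
    fix s assume s: "s \<in> {0..t1}"
    then have sT: "s \<in> {0..T}" using t1 by auto
    show "wnorm (b s) \<le> R0 + 1" using Rb[OF sT] by simp
    have "wnorm (a s) \<le> wnorm (a s - b s) + wnorm (b s)" using wnorm_triangle[of "a s - b s" "b s"] by simp
    then show "wnorm (a s) \<le> R0 + 1" using Rb[OF sT] bd[OF s] unfolding w_def by simp
  qed
  have all: "\<forall>t\<in>{0..T}. w t < 1"
  proof (rule ccontr)
    assume "\<not> (\<forall>t\<in>{0..T}. w t < 1)"
    define S where "S = {0..T} \<inter> w -` {1..}"
    have Sne: "S \<noteq> {}" using \<open>\<not> _\<close> unfolding S_def by (auto simp: not_less)
    have Scl: "closed S" unfolding S_def by (rule continuous_closed_preimage[OF wc]) auto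
    have Sbb: "bdd_below S" unfolding S_def by (rule bdd_belowI[of _ 0]) auto
    define ts where "ts = Inf S"
    have tsS: "ts \<in> S" unfolding ts_def by (rule closed_contains_Inf[OF Sne Sbb Scl])
    then have tsT: "ts \<in> {0..T}" and wts: "1 \<le> w ts" unfolding S_def by auto
    have below: "w s < 1" if "s \<in> {0..T}" "s < ts" for s
    proof (rule ccontr)
      assume "\<not> w s < 1"
      then have "s \<in> S" using that unfolding S_def by auto
      then have "ts \<le> s" unfolding ts_def by (rule cInf_lower[OF _ Sbb])
      then show False using that by simp
    qed
    have wts1: "w ts \<le> 1"
    proof (rule ccontr)
      assume "\<not> w ts \<le> 1"
      then have g: "w ts > 1" by simp
      have ts0: "ts > 0" using tsT w0 g by (cases "ts = 0") auto
      have "\<exists>d>0. \<forall>s\<in>{0..T}. dist s ts < d \<longrightarrow> dist (w s) (w ts) < w ts - 1"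
        using wc[unfolded continuous_on_iff, rule_format, OF tsT, of "w ts - 1"] g by simp
      then obtain d where d: "d > 0" "\<And>s. s \<in> {0..T} \<Longrightarrow> dist s ts < d \<Longrightarrow> dist (w s) (w ts) < w ts - 1"
        by blast
      define s where "s = max 0 (ts - d/2)"
      have sT: "s \<in> {0..T}" unfolding s_def using tsT d by auto
      have sl: "s < ts" unfolding s_def using ts0 d by auto
      have "dist s ts < d" unfolding s_def dist_real_def using ts0 d by auto
      from d(2)[OF sT this] have "w s > 1" by (auto simp: dist_real_def)
      then show False using below[OF sT sl] by simp
    qed
    have "w ts \<le> Cb * wnorm (a0 - b0)"
    proof (rule PE[OF tsT])
      fix s assume s: "s \<in> {0..ts}"
      show "w s \<le> 1"
      proof (cases "s = ts")
        case True then show ?thesis using wts1 by simp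
      next
        case False then show ?thesis using below[of s] s tsT by auto
      qed
    qed (use tsT in auto)
    then show False using wts small unfolding Cb_def by simp
  qed
  show ?thesis
  proof
    fix t assume t: "t \<in> {0..T}"
    have "w t \<le> Cb * wnorm (a0 - b0)"
      by (rule PE[of T]) (use T all t in \<open>auto intro: less_imp_le\<close>)
    then show "wnorm (a t - b t) \<le> Cst (real CARD('d)) CB T (R0 + 1) (norm b0) * wnorm (a0 - b0)"
      unfolding w_def Cb_def .
  qed
qed

lemma wcont_bounded:
  fixes a :: "real \<Rightarrow> 'd::finite meas"
  assumes "wcont_on T a"
  shows "\<exists>R\<ge>0. \<forall>t\<in>{0..T}. wnorm (a t) \<le> R"
proof -
  have z: "wcont_on T (\<lambda>_. 0::'d meas)" unfolding wcont_on_def by (auto simp: wnorm_zero)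
  have "continuous_on {0..T} (\<lambda>s. wnorm (a s - 0))" by (rule wcont_diff[OF assms z]) simp
  then have "compact ((\<lambda>s. wnorm (a s)) ` {0..T})" by (intro compact_continuous_image) auto
  then obtain R where R: "\<forall>x\<in>(\<lambda>s. wnorm (a s)) ` {0..T}. norm x \<le> R"
    using compact_imp_bounded[OF \<open>compact _\<close>] unfolding bounded_iff by blast
  show ?thesis
    by (rule exI[of _ "max R 0"]) (use R in auto)
qed

theorem theorem5p1:
  fixes B :: "'d::finite meas \<Rightarrow> ('d R \<Rightarrow> 'd R)" and CB T :: real
    and \<xi>0 :: "'d meas" and \<xi>0n :: "nat \<Rightarrow> 'd meas"
    and \<xi> :: "real \<Rightarrow> 'd meas" and \<xi>n :: "nat \<Rightarrow> real \<Rightarrow> 'd meas"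
  assumes "standing_assms B CB"
    and "T \<ge> 0"
    and "(\<lambda>n. wnorm (\<xi>0n n - \<xi>0)) \<longlonglongrightarrow> 0"
    and "unique_solution B T \<xi>0 \<xi>"
    and "\<And>n. unique_solution B T (\<xi>0n n) (\<xi>n n)"
  shows "(\<lambda>n. SUP t\<in>{0..T}. wnorm (\<xi>n n t - \<xi> t)) \<longlonglongrightarrow> 0
     \<and> (\<exists>C>0. \<forall>n. (SUP t\<in>{0..T}. wnorm (\<xi>n n t - \<xi> t)) \<le> C * wnorm (\<xi>0n n - \<xi>0))"
proof -
  note sa = assms(1) and T = assms(2) and lim = assms(3)
  have sol: "is_solution B T \<xi>0 \<xi>" using assms(4) unfolding unique_solution_def by auto
  have soln: "is_solution B T (\<xi>0n n) (\<xi>n n)" for n using assms(5)[of n] unfolding unique_solution_def by auto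
  have CB: "CB > 0" by (rule sa_CB[OF sa])
  define d where "d = real CARD('d)"
  define \<delta> where "\<delta> n = wnorm (\<xi>0n n - \<xi>0)" for n
  have wx: "wcont_on T \<xi>" using sol unfolding is_solution_def by simp
  obtain R0 where R0: "R0 \<ge> 0" "\<And>t. t \<in> {0..T} \<Longrightarrow> wnorm (\<xi> t) \<le> R0"
    using wcont_bounded[OF wx] by blast
  have wxn: "wcont_on T (\<xi>n n)" for n using soln[of n] unfolding is_solution_def by simp
  have "\<forall>n. \<exists>R\<ge>0. \<forall>t\<in>{0..T}. wnorm (\<xi>n n t) \<le> R"
    using wcont_bounded[OF wxn] by blast
  then obtain Rf where Rf': "\<forall>n. Rf n \<ge> 0 \<and> (\<forall>t\<in>{0..T}. wnorm (\<xi>n n t) \<le> Rf n)"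
    using choice[OF \<open>\<forall>n. _\<close>] by blast
  then have Rf: "\<And>n. Rf n \<ge> 0" "\<And>n t. t \<in> {0..T} \<Longrightarrow> wnorm (\<xi>n n t) \<le> Rf n" by auto
  define Cb where "Cb = Cst d CB T (R0 + 1) (norm \<xi>0)"
  define Cn where "Cn n = Cst d CB T (max R0 (Rf n)) (norm \<xi>0)" for n
  have Cb0: "0 \<le> Cb" unfolding Cb_def d_def by (rule Cst_nonneg) (use CB R0 T in auto)
  have Cn0: "0 \<le> Cn n" for n unfolding Cn_def d_def by (rule Cst_nonneg) (use CB R0 T in auto)
  have "(\<lambda>n. Cb * \<delta> n) \<longlonglongrightarrow> Cb * 0"
    unfolding \<delta>_def by (intro tendsto_mult tendsto_const lim)
  then have "eventually (\<lambda>n. Cb * \<delta> n < 1) sequentially"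
    by (rule order_tendstoD(2)) simp
  then obtain N where N: "\<And>n. n \<ge> N \<Longrightarrow> Cb * \<delta> n < 1" unfolding eventually_sequentially by blast
  define C where "C = Cb + (\<Sum>n<N. Cn n) + 1"
  have Cpos: "C > 0" unfolding C_def using Cb0 Cn0 by (simp add: sum_nonneg add_nonneg_pos)
  have bnd: "wnorm (\<xi>n n t - \<xi> t) \<le> C * \<delta> n" if t: "t \<in> {0..T}" for n t
  proof (cases "n \<ge> N")
    case True
    have "\<forall>t\<in>{0..T}. wnorm (\<xi>n n t - \<xi> t) \<le> Cb * \<delta> n"
      unfolding Cb_def d_def \<delta>_def
      by (rule bootstrap[OF sa T soln sol R0(1) R0(2)]) (use N[OF True] in \<open>unfold Cb_def d_def \<delta>_def\<close>)
    then have "wnorm (\<xi>n n t - \<xi> t) \<le> Cb * \<delta> n" using t by blast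
    also have "\<dots> \<le> C * \<delta> n"
      using Cn0 by (intro mult_right_mono) (auto simp: C_def \<delta>_def wnorm_nonneg sum_nonneg)
    finally show ?thesis .
  next
    case False
    have "wnorm (\<xi>n n t - \<xi> t) \<le> Cn n * \<delta> n"
      unfolding Cn_def d_def \<delta>_def
    proof (rule pair_estimate[OF sa T soln sol _ _ _ _ t])
      show "T \<in> {0..T}" using T by simp
      show "0 \<le> max R0 (Rf n)" using R0 by simp
      show "wnorm (\<xi>n n s) \<le> max R0 (Rf n)" if "s \<in> {0..T}" for s using Rf(2)[of s n] that by (simp add: le_max_iff_disj)
      show "wnorm (\<xi> s) \<le> max R0 (Rf n)" if "s \<in> {0..T}" for s using R0(2)[OF that] by (simp add: le_max_iff_disj)
    qed
    also have "\<dots> \<le> C * \<delta> n"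
    proof (intro mult_right_mono)
      have "Cn n \<le> (\<Sum>n<N. Cn n)" using False Cn0 by (intro member_le_sum) auto
      then show "Cn n \<le> C" unfolding C_def using Cb0 by simp
      show "0 \<le> \<delta> n" unfolding \<delta>_def by (rule wnorm_nonneg)
    qed
    finally show ?thesis .
  qed
  have supb: "(SUP t\<in>{0..T}. wnorm (\<xi>n n t - \<xi> t)) \<le> C * \<delta> n" for n
  proof (rule cSUP_least)
    show "{0..T} \<noteq> {}" using T by simp
    fix t assume "t \<in> {0..T}" then show "wnorm (\<xi>n n t - \<xi> t) \<le> C * \<delta> n" by (rule bnd)
  qed
  have sup0: "0 \<le> (SUP t\<in>{0..T}. wnorm (\<xi>n n t - \<xi> t))" for n
  proof -
    have bdd: "bdd_above ((\<lambda>t. wnorm (\<xi>n n t - \<xi> t)) ` {0..T})"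
      by (rule bdd_aboveI2[of _ _ "C * \<delta> n"]) (rule bnd, simp)
    have "wnorm (\<xi>n n 0 - \<xi> 0) \<le> (SUP t\<in>{0..T}. wnorm (\<xi>n n t - \<xi> t))"
      by (rule cSUP_upper[OF _ bdd]) (use T in simp)
    then show ?thesis using wnorm_nonneg[of "\<xi>n n 0 - \<xi> 0"] by linarith
  qed
  have hl: "(\<lambda>n. C * \<delta> n) \<longlonglongrightarrow> C * 0" unfolding \<delta>_def by (intro tendsto_mult tendsto_const lim)
  have "(\<lambda>n. SUP t\<in>{0..T}. wnorm (\<xi>n n t - \<xi> t)) \<longlonglongrightarrow> 0"
  proof (rule tendsto_sandwich[of "\<lambda>n. 0" _ _ "\<lambda>n. C * \<delta> n"])
    show "\<forall>\<^sub>F n in sequentially. 0 \<le> (SUP t\<in>{0..T}. wnorm (\<xi>n n t - \<xi> t))" using sup0 by simp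
    show "\<forall>\<^sub>F n in sequentially. (SUP t\<in>{0..T}. wnorm (\<xi>n n t - \<xi> t)) \<le> C * \<delta> n" using supb by simp
    show "(\<lambda>n. 0::real) \<longlonglongrightarrow> 0" by simp
    show "(\<lambda>n. C * \<delta> n) \<longlonglongrightarrow> 0" using hl by simp
  qed
  moreover have "\<exists>C>0. \<forall>n. (SUP t\<in>{0..T}. wnorm (\<xi>n n t - \<xi> t)) \<le> C * wnorm (\<xi>0n n - \<xi>0)"
    using Cpos supb unfolding \<delta>_def by blast
  ultimately show ?thesis by blast
qed


end
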